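(* For all $1\le i,j\le m+n$, as operators on $\widetilde T(\mathbb V)$, $$L(e_i)L(e_j)=(-1)^{\hat i\hat j}q_i^{\delta_{ij}}L(e_j)L(e_i)L(T_1^{\gamma(i,j)}),$$ $$L(e_i^\ast)L(e_j^\ast)=(-1)^{\hat i\hat j}q_i^{\delta_{ij}}L(T_1^{\gamma(i,j)})L(e_j^\ast)L(e_i^\ast),$$ $$L(e_i^\ast)L(e_j)=\delta_{ij}K_i^{-1}+(-1)^{\hat i\hat j}L(e_j)L(T_1^{-\gamma(i,j)})L(e_i^\ast).$$
   Context: $q$ is an indeterminate, $m,n\ge1$, $[m+n]=\{1,\dots,m+n\}$. The Hecke algebra $\mathscr H_d$ is the $\mathbb C(q)$-algebra generated by $T_1,\dots,T_{d-1}$ with relations $(T_i-q)(T_i+q^{-1})=0$, $T_iT_{i+1}T_i=T_{i+1}T_iT_{i+1}$, $T_iT_j=T_jT_i$ ($|i-j|>1$); $T_w=T_{i_1}\cdots T_{i_k}$ for a reduced expression $w=s_{i_1}\cdots s_{i_k}\in\mathfrak S_d$; $\mathscr H_\infty$ is the inductive limit of $\mathscr H_0\subset\mathscr H_1\subset\cdots$, and $T\mapsto T^{\uparrow k}$ is the algebra endomorphism with $T_i^{\uparrow k}=T_{i+k}$. Parity: $\hat i=0$ if $i\le m$, $\hat i=1$ if $i>m$; $q_i=q^{(-1)^{\hat i}}$. $\gamma(i,j)=1$ if $i>j$ and $-1$ if $i\le j$. $\mathbb V$ is the $\mathbb C(q)$-vector space with basis $e_1,\dots,e_{m+n}$, $e_i$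 of parity $\hat i$; $e_1^\ast,\dots,e_{m+n}^\ast$ is the dual basis. For $I=(i_d,\dots,i_1)\in[m+n]^d$, $e_I=e_{i_d}\otimes\cdots\otimes e_{i_1}$, written $e_{i_d}\cdots e_{i_1}$; $I.s_k$ is $I$ with the entries $i_k,i_{k+1}$ swapped. The right $\mathscr H_d$-action on $\mathbb V^{\otimes d}$: $e_I.T_k=(-1)^{\hat i_k\hat i_{k+1}}e_{I.s_k}$ if $i_k>i_{k+1}$; $=(-1)^{\hat i_k}q_{i_k}e_I$ if $i_k=i_{k+1}$; $=(-1)^{\hat i_k\hat i_{k+1}}e_{I.s_k}+(q-q^{-1})e_I$ if $i_k<i_{k+1}$. Set $\widetilde T_d(\mathbb V)=\mathbb V^{\otimes d}\otimes_{\mathscr H_d}\mathscr H_\infty$, $\widetilde T(\mathbb V)=\bigoplus_{d\ge0}\widetilde T_d(\mathbb V)$, with product $(e_{j_k}\cdots e_{j_1}\otimes T_\tau)\cdot(e_{i_d}\cdots e_{i_1}\otimes T_\sigma)=e_{j_k}\cdots e_{j_1}e_{i_d}\cdots e_{i_1}\otimes T_\tau^{\uparrow d}T_\sigma$. For $\varphi\in\widetilde T(\mathbb V)$, $L(\varphi)$ is left multiplication by $\varphi$; $L(e_i)$ uses $e_i\otimes1\in\widetilde T_1(\mathbb V)$ and $L(T)$ for $T\in\mathscr H_\infty$ uses $1\otimes T\in\widetilde T_0(\mathbb V)$. For $j\in[m+n]$, $f_j(e_r)=q_j^{-\delta_{jr}}e_r$ and $g_j(e_r)=e_r\otimes T_1^{-\gamma(j,r)}\in\widetilde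 T_1(\mathbb V)$, and $L(e_j^\ast)=0$ on $\widetilde T_0(\mathbb V)$, $$L(e_j^\ast)(e_{i_d}\cdots e_{i_1}\otimes T_\sigma)=\sum_{k=1}^d(-1)^{\hat j(\hat i_d+\cdots+\hat i_{k+1})}\langle e_j^\ast,e_{i_k}\rangle\,g_j(e_{i_d})\cdots g_j(e_{i_{k+1}})f_j(e_{i_{k-1}})\cdots f_j(e_{i_1})\cdot T_\sigma$$ (product in $\widetilde T(\mathbb V)$). The operator $K_j$ ($j\in[m+n]$) on $\widetilde T(\mathbb V)$ acts by $K_j(e_I\otimes T)=q_j^{\#\{r:\,i_r=j\}}\,e_I\otimes T$. *)

theory Defs
  imports "HOL-Library.Poly_Mapping" "HOL-Computational_Algebra.Fraction_Field"
          "HOL-Computational_Algebra.Polynomial"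
begin

section \<open>Scalars: the field C(q) of rational functions in an indeterminate q\<close>

type_synonym K = "complex poly fract"

definition qq :: K where "qq = Fraction_Field.Fract [:0, 1:] 1"

definition smul :: "K \<Rightarrow> ('a \<Rightarrow>\<^sub>0 K) \<Rightarrow> ('a \<Rightarrow>\<^sub>0 K)" where
  "smul c x = Poly_Mapping.map (\<lambda>v. c * v) x"

definition basis :: "'a \<Rightarrow> ('a \<Rightarrow>\<^sub>0 K)" where
  "basis b = Poly_Mapping.single b 1"

definition lext :: "('a \<Rightarrow> ('b \<Rightarrow>\<^sub>0 K)) \<Rightarrow> ('a \<Rightarrow>\<^sub>0 K) \<Rightarrow> ('b \<Rightarrow>\<^sub>0 K)" where
  "lext f x = (\<Sum>b\<in>Poly_Mapping.keys x. smul (Poly_Mapping.lookup x b) (f b))"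

inductive_set kspan :: "('a \<Rightarrow>\<^sub>0 K) set \<Rightarrow> ('a \<Rightarrow>\<^sub>0 K) set" for S where
  zero: "0 \<in> kspan S"
| step: "x \<in> kspan S \<Longrightarrow> s \<in> S \<Longrightarrow> x + smul c s \<in> kspan S"

definition par :: "nat \<Rightarrow> nat \<Rightarrow> nat" where
  "par m i = (if i \<le> m then 0 else 1)"

definition qi :: "nat \<Rightarrow> nat \<Rightarrow> K" where
  "qi m i = (if i \<le> m then qq else inverse qq)"

definition psign :: "nat \<Rightarrow> nat \<Rightarrow> nat \<Rightarrow> K" where
  "psign m i j = (-1) ^ (par m i * par m j)"

definition gam :: "nat \<Rightarrow> nat \<Rightarrow> int" where
  "gam i j = (if i > j then 1 else -1)"

text \<open>A word [k1,...,kr] (letters \<ge> 1) stands for T_k1 ... T_kr in the free algebra on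
  the generators T_1, T_2, ...; a Hecke element representative is a formal K-linear
  combination of words. H_infinity is this free algebra modulo the two-sided ideal
  generated by the Hecke relations (see hecke_rels).\<close>

type_synonym hword = "nat list"
type_synonym helt = "hword \<Rightarrow>\<^sub>0 K"

definition hmul :: "helt \<Rightarrow> helt \<Rightarrow> helt" where
  "hmul a b = (\<Sum>v\<in>Poly_Mapping.keys a. \<Sum>w\<in>Poly_Mapping.keys b. smul (Poly_Mapping.lookup a v * Poly_Mapping.lookup b w) (basis (v @ w)))"

definition hT :: "nat \<Rightarrow> helt" where "hT k = basis [k]"

text \<open>T_k^{-1} = T_k - (q - q^{-1}), from the quadratic relation.\<close>
definition hTinv :: "nat \<Rightarrow> helt" where
  "hTinv k = hT k - smul (qq - inverse qq) (basis [])"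

text \<open>T_k^e for e \<in> {1,-1} (the only exponents used).\<close>
definition hTpow :: "nat \<Rightarrow> int \<Rightarrow> helt" where
  "hTpow k e = (if e = 1 then hT k else if e = -1 then hTinv k else undefined)"

definition hprod :: "helt list \<Rightarrow> helt" where
  "hprod hs = foldr hmul hs (basis [])"

definition hshift :: "nat \<Rightarrow> helt \<Rightarrow> helt" where
  "hshift s h = lext (\<lambda>w. basis (map (\<lambda>i. i + s) w)) h"

definition hecke_rels :: "helt set" where
  "hecke_rels =
     {basis [i, i] - smul (qq - inverse qq) (basis [i]) - basis [] | i. 1 \<le> i}
   \<union> {basis [i, Suc i, i] - basis [Suc i, i, Suc i] | i. 1 \<le> i}
   \<union> {basis [i, j] - basis [j, i] | i j. 1 \<le> i \<and> 1 \<le> j \<and> (i + 1 < j \<or> j + 1 < i)}"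

section \<open>The space T~(V) = (+)_d V^{(x)d} (x)_{H_d} H_infinity, via representatives\<close>

text \<open>A basis representative (I, u) with I = [i_1, ..., i_d] (so I ! (k-1) = i_k) stands
  for e_{i_d} ... e_{i_1} (x) T_u. Representatives are formal K-linear combinations of
  such pairs; T~(V) is the space of valid representatives modulo the subspace Rel.\<close>

type_synonym tvec = "(nat list \<times> hword) \<Rightarrow>\<^sub>0 K"

definition valid_idx :: "nat \<Rightarrow> nat \<Rightarrow> nat list \<Rightarrow> bool" where
  "valid_idx m n I \<longleftrightarrow> set I \<subseteq> {1..m+n}"

definition valid_word :: "hword \<Rightarrow> bool" where
  "valid_word u \<longleftrightarrow> 0 \<notin> set u"

definition validv :: "nat \<Rightarrow> nat \<Rightarrow> tvec \<Rightarrow> bool" where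
  "validv m n x \<longleftrightarrow> (\<forall>(I, u) \<in> Poly_Mapping.keys x. valid_idx m n I \<and> valid_word u)"

definition tens :: "nat list \<Rightarrow> helt \<Rightarrow> tvec" where
  "tens I h = lext (\<lambda>w. basis (I, w)) h"

definition tensv :: "(nat list \<Rightarrow>\<^sub>0 K) \<Rightarrow> hword \<Rightarrow> tvec" where
  "tensv v u = lext (\<lambda>I. basis (I, u)) v"

text \<open>The right action e_I . T_k on V^{(x)d} (1 \<le> k < d).\<close>
definition actT :: "nat \<Rightarrow> nat list \<Rightarrow> nat \<Rightarrow> (nat list \<Rightarrow>\<^sub>0 K)" where
  "actT m I k =
    (let a = I ! (k - 1); b = I ! k; J = I[k - 1 := b, k := a] in
     if a > b then smul (psign m a b) (basis J)
     else if a = b then smul ((-1) ^ par m a * qi m a) (basis I)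
     else smul (psign m a b) (basis J) + smul (qq - inverse qq) (basis I))"

definition relgen :: "nat \<Rightarrow> nat \<Rightarrow> tvec set" where
  "relgen m n =
     {tens I (hmul (basis a) (hmul r (basis b))) | I a b r.
        valid_idx m n I \<and> valid_word a \<and> valid_word b \<and> r \<in> hecke_rels}
   \<union> {tensv (actT m I k) u - basis (I, k # u) | I k u.
        valid_idx m n I \<and> valid_word u \<and> 1 \<le> k \<and> k < length I}"

definition Rel :: "nat \<Rightarrow> nat \<Rightarrow> tvec set" where
  "Rel m n = kspan (relgen m n)"

definition teq :: "nat \<Rightarrow> nat \<Rightarrow> tvec \<Rightarrow> tvec \<Rightarrow> bool" where
  "teq m n x y \<longleftrightarrow> x - y \<in> Rel m n"

definition Le :: "nat \<Rightarrow> tvec \<Rightarrow> tvec" where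
  "Le i = lext (\<lambda>(I, u). basis (I @ [i], u))"

definition Lh :: "helt \<Rightarrow> tvec \<Rightarrow> tvec" where
  "Lh h = lext (\<lambda>(I, u). tens I (hmul (hshift (length I) h) (basis u)))"

definition LT1pow :: "int \<Rightarrow> tvec \<Rightarrow> tvec" where
  "LT1pow e = Lh (hTpow 1 e)"

definition Kinv :: "nat \<Rightarrow> nat \<Rightarrow> tvec \<Rightarrow> tvec" where
  "Kinv m i = lext (\<lambda>(I, u). smul (inverse (qi m i) ^ count_list I i) (basis (I, u)))"

definition Lstar :: "nat \<Rightarrow> nat \<Rightarrow> tvec \<Rightarrow> tvec" where
  "Lstar m j = lext (\<lambda>(I, u).
     \<Sum>k\<in>{1..length I}.
       if I ! (k - 1) = j then
         smul ((-1) ^ (par m j * (\<Sum>p\<in>{k+1..length I}. par m (I ! (p - 1))))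
               * (\<Prod>p\<in>{1..<k}. if I ! (p - 1) = j then inverse (qi m j) else 1))
              (tens (take (k - 1) I @ drop k I)
                    (hmul (hprod (map (\<lambda>p. hTpow (p - 1) (- gam j (I ! (p - 1))))
                                      (rev [k+1..<length I + 1])))
                          (basis u)))
       else 0)"

end

theory Submission
  imports Defs
begin



lemma qq_nz: "qq \<noteq> 0" unfolding qq_def by (simp add: Zero_fract_def eq_fract)

section \<open>Linear algebra on poly mappings\<close>

lemma lookup_smul[simp]: "Poly_Mapping.lookup (smul c x) k = c * Poly_Mapping.lookup x k"
  by (simp add: smul_def Poly_Mapping.map.rep_eq when_def)

lemma lookup_basis: "Poly_Mapping.lookup (basis b) k = (if b = k then 1 else 0)"
  by (simp add: basis_def lookup_single when_def)

lemma keys_basis[simp]: "Poly_Mapping.keys (basis b) = {b}"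
  by (simp add: basis_def)

lemma keys_smul: "Poly_Mapping.keys (smul c x) \<subseteq> Poly_Mapping.keys x"
  by (auto simp: in_keys_iff)

lemma smul_add: "smul c (x + y) = smul c x + smul c y"
  by (rule poly_mapping_eqI) (simp add: lookup_add algebra_simps)
lemma smul_add_left: "smul (c + d) x = smul c x + smul d x"
  by (rule poly_mapping_eqI) (simp add: lookup_add algebra_simps)
lemma smul_diff: "smul c (x - y) = smul c x - smul c y"
  by (rule poly_mapping_eqI) (simp add: lookup_minus algebra_simps)
lemma smul_diff_left: "smul (c - d) x = smul c x - smul d x"
  by (rule poly_mapping_eqI) (simp add: lookup_minus algebra_simps)
lemma smul_uminus: "smul c (- x) = - smul c x"
  by (rule poly_mapping_eqI) (simp)
lemma smul_smul[simp]: "smul c (smul d x) = smul (c * d) x"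
  by (rule poly_mapping_eqI) (simp)
lemma smul_zero[simp]: "smul c 0 = 0"
  by (rule poly_mapping_eqI) (simp)
lemma smul_0[simp]: "smul 0 x = 0"
  by (rule poly_mapping_eqI) (simp)
lemma smul_1[simp]: "smul 1 x = x"
  by (rule poly_mapping_eqI) (simp)
lemma smul_m1: "smul (-1) x = - x"
  by (rule poly_mapping_eqI) (simp)
lemma smul_sum: "smul c (sum f S) = (\<Sum>s\<in>S. smul c (f s))"
  by (induction S rule: infinite_finite_induct) (auto simp: smul_add)
lemma smul_sum_left: "smul (sum f S) x = (\<Sum>s\<in>S. smul (f s) x)"
  by (induction S rule: infinite_finite_induct) (auto simp: smul_add_left)

lemma lext_eq_sum:
  assumes "finite S" "Poly_Mapping.keys x \<subseteq> S"
  shows "lext f x = (\<Sum>b\<in>S. smul (Poly_Mapping.lookup x b) (f b))"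
  unfolding lext_def
  by (rule sum.mono_neutral_left) (use assms in \<open>auto simp: in_keys_iff\<close>)

lemma lext_add: "lext f (x + y) = lext f x + lext f y"
proof -
  let ?S = "Poly_Mapping.keys x \<union> Poly_Mapping.keys y"
  have "Poly_Mapping.keys (x + y) \<subseteq> ?S" by (rule keys_add)
  then show ?thesis
    by (simp add: lext_eq_sum[of ?S] lookup_add smul_add_left sum.distrib)
qed

lemma lext_smul: "lext f (smul c x) = smul c (lext f x)"
  by (simp add: lext_eq_sum[of "Poly_Mapping.keys x"] keys_smul smul_sum)

lemma lext_basis[simp]: "lext f (basis b) = f b"
  by (simp add: lext_def basis_def)

lemma lext_zero[simp]: "lext f 0 = 0"
  by (simp add: lext_def)

lemma lext_cong: "(\<And>b. b \<in> Poly_Mapping.keys x \<Longrightarrow> f b = g b) \<Longrightarrow> lext f x = lext g x"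
  by (simp add: lext_def)

lemma lext_fun_add: "lext (\<lambda>b. f b + g b) x = lext f x + lext g x"
  by (simp add: lext_def smul_add sum.distrib)
lemma lext_fun_smul: "lext (\<lambda>b. smul c (f b)) x = smul c (lext f x)"
  by (simp add: lext_def smul_sum mult.commute)
lemma lext_fun_zero: "lext (\<lambda>b. 0) x = 0"
  by (simp add: lext_def)
lemma lext_fun_sum: "finite S \<Longrightarrow> lext (\<lambda>b. \<Sum>s\<in>S. f s b) x = (\<Sum>s\<in>S. lext (f s) x)"
  by (induction S rule: finite_induct) (auto simp: lext_fun_add lext_fun_zero)

lemma sum_delta_mult: "finite K \<Longrightarrow> (\<Sum>xa\<in>K. f xa * (if xa = k then 1 else 0)) = (if k \<in> K then f k else (0::K))"
proof -
  assume "finite K"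
  have "(\<Sum>xa\<in>K. f xa * (if xa = k then 1 else 0)) = (\<Sum>xa\<in>K. if xa = k then f xa else 0)"
    by (rule sum.cong) auto
  then show ?thesis using \<open>finite K\<close> by (simp add: sum.delta')
qed

lemma lext_basis_id: "lext basis x = x"
  by (rule poly_mapping_eqI)
     (auto simp: lext_def lookup_sum lookup_basis sum_delta_mult in_keys_iff)

definition lin :: "(('a \<Rightarrow>\<^sub>0 K) \<Rightarrow> ('b \<Rightarrow>\<^sub>0 K)) \<Rightarrow> bool" where
  "lin g \<longleftrightarrow> (\<forall>x y. g (x + y) = g x + g y) \<and> (\<forall>c x. g (smul c x) = smul c (g x))"

lemma lin_lext: "lin (lext f)"
  by (simp add: lin_def lext_add lext_smul)

lemma lin_add: "lin g \<Longrightarrow> g (x + y) = g x + g y" by (simp add: lin_def)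
lemma lin_smul: "lin g \<Longrightarrow> g (smul c x) = smul c (g x)" by (simp add: lin_def)
lemma lin_zero: "lin g \<Longrightarrow> g 0 = 0"
  using lin_smul[of g 0 0] by simp
lemma lin_uminus: "lin g \<Longrightarrow> g (- x) = - g x"
  using lin_smul[of g "-1" x] by (simp add: smul_m1)
lemma lin_diff: "lin g \<Longrightarrow> g (x - y) = g x - g y"
  using lin_add[of g x "-y"] lin_uminus[of g y] by simp
lemma lin_sum: "lin g \<Longrightarrow> g (sum f S) = (\<Sum>s\<in>S. g (f s))"
  by (induction S rule: infinite_finite_induct) (auto simp: lin_add lin_zero)

lemma lin_expand: "lin g \<Longrightarrow> g x = lext (\<lambda>b. g (basis b)) x"
proof -
  assume g: "lin g"
  have "g x = g (lext basis x)" by (simp add: lext_basis_id)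
  also have "\<dots> = lext (\<lambda>b. g (basis b)) x"
    unfolding lext_def by (simp add: lin_sum[OF g] lin_smul[OF g])
  finally show ?thesis .
qed

lemma lin_eqI: "lin g \<Longrightarrow> lin h \<Longrightarrow> (\<And>b. b \<in> Poly_Mapping.keys x \<Longrightarrow> g (basis b) = h (basis b)) \<Longrightarrow> g x = h x"
  by (metis lin_expand lext_cong)

lemma lin_comp: "lin g \<Longrightarrow> lin h \<Longrightarrow> lin (\<lambda>x. g (h x))"
  by (simp add: lin_def)
lemma lin_id: "lin (\<lambda>x. x)" by (simp add: lin_def)
lemma lin_plus: "lin g \<Longrightarrow> lin h \<Longrightarrow> lin (\<lambda>x. g x + h x)"
  by (simp add: lin_def smul_add)
lemma lin_minus: "lin g \<Longrightarrow> lin h \<Longrightarrow> lin (\<lambda>x. g x - h x)"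
  by (simp add: lin_def smul_diff)
lemma lin_smulc: "lin g \<Longrightarrow> lin (\<lambda>x. smul c (g x))"
  by (simp add: lin_def smul_add mult.commute)
lemma lin_const0: "lin (\<lambda>x. 0)"
  by (simp add: lin_def)
lemma lin_if: "lin g \<Longrightarrow> lin h \<Longrightarrow> lin (\<lambda>x. if P then g x else h x)"
  by (simp add: lin_def)
lemma lin_sumf: "(\<And>s. s \<in> S \<Longrightarrow> lin (g s)) \<Longrightarrow> lin (\<lambda>x. \<Sum>s\<in>S. g s x)"
  by (induction S rule: infinite_finite_induct) (auto simp: lin_def sum.distrib smul_sum smul_add)

lemma kspan_add: assumes "x \<in> kspan S" "y \<in> kspan S" shows "x + y \<in> kspan S"
  using assms(2)
proof (induction y rule: kspan.induct)
  case zero then show ?case using assms(1) by simp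
next
  case (step y s c)
  then show ?case using kspan.step[of "x + y" S s c] by (simp add: add.assoc)
qed

lemma kspan_smul: "x \<in> kspan S \<Longrightarrow> smul c x \<in> kspan S"
proof (induction x rule: kspan.induct)
  case zero then show ?case by (simp add: kspan.zero)
next
  case (step y s d)
  then show ?case using kspan.step[of "smul c y" S s "c * d"] by (simp add: smul_add)
qed

lemma kspan_gen: "s \<in> S \<Longrightarrow> s \<in> kspan S"
  using kspan.step[OF kspan.zero, of s S 1] by simp

lemma kspan_uminus: "x \<in> kspan S \<Longrightarrow> - x \<in> kspan S"
  using kspan_smul[of x S "-1"] by (simp add: smul_m1)

lemma kspan_diff: "x \<in> kspan S \<Longrightarrow> y \<in> kspan S \<Longrightarrow> x - y \<in> kspan S"
  using kspan_add[OF _ kspan_uminus] by fastforce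

lemma kspan_sum: "(\<And>s. s \<in> A \<Longrightarrow> f s \<in> kspan S) \<Longrightarrow> sum f A \<in> kspan S"
  by (induction A rule: infinite_finite_induct) (auto intro: kspan.zero kspan_add)

lemma kspan_lext: "(\<And>b. b \<in> Poly_Mapping.keys x \<Longrightarrow> f b \<in> kspan S) \<Longrightarrow> lext f x \<in> kspan S"
  unfolding lext_def by (auto intro: kspan_sum kspan_smul)

lemma kspan_lin_image:
  assumes "lin g" "x \<in> kspan S" "\<And>s. s \<in> S \<Longrightarrow> g s \<in> kspan T"
  shows "g x \<in> kspan T"
  using assms(2)
proof (induction x rule: kspan.induct)
  case zero then show ?case by (simp add: lin_zero[OF assms(1)] kspan.zero)
next
  case (step y s c)
  then show ?case by (simp add: lin_add[OF assms(1)] lin_smul[OF assms(1)] kspan_add kspan_smul assms(3))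
qed

lemma kspan_lin_diff:
  assumes "lin g" "lin h" "\<And>b. b \<in> Poly_Mapping.keys x \<Longrightarrow> g (basis b) - h (basis b) \<in> kspan S"
  shows "g x - h x \<in> kspan S"
proof -
  have "g x - h x = lext (\<lambda>b. g (basis b) - h (basis b)) x"
    using lin_eqI[OF lin_minus[OF assms(1,2)] lin_lext, of x "\<lambda>b. g (basis b) - h (basis b)"]
    by simp
  then show ?thesis using assms(3) by (simp add: kspan_lext)
qed




lemma hmul_lext: "hmul a b = lext (\<lambda>v. lext (\<lambda>w. basis (v @ w)) b) a"
  unfolding hmul_def lext_def by (simp add: smul_sum)

lemma hmul_lext2: "hmul a b = lext (\<lambda>w. lext (\<lambda>v. basis (v @ w)) a) b"
  unfolding hmul_def lext_def by (subst sum.swap) (simp add: smul_sum mult.commute)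

lemma lin_hmul_r: "lin (hmul a)"
  by (simp add: hmul_lext2[abs_def] lin_lext)
lemma lin_hmul_l: "lin (\<lambda>a. hmul a b)"
  by (simp add: hmul_lext lin_lext)

lemma hmul_basis[simp]: "hmul (basis v) (basis w) = basis (v @ w)"
  by (simp add: hmul_lext)

lemma hmul_add_r: "hmul a (x + y) = hmul a x + hmul a y" using lin_add[OF lin_hmul_r] .
lemma hmul_add_l: "hmul (x + y) b = hmul x b + hmul y b" using lin_add[OF lin_hmul_l] .
lemma hmul_diff_r: "hmul a (x - y) = hmul a x - hmul a y" using lin_diff[OF lin_hmul_r] .
lemma hmul_diff_l: "hmul (x - y) b = hmul x b - hmul y b" using lin_diff[OF lin_hmul_l] .
lemma hmul_smul_r: "hmul a (smul c x) = smul c (hmul a x)" using lin_smul[OF lin_hmul_r] .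
lemma hmul_smul_l: "hmul (smul c x) b = smul c (hmul x b)" using lin_smul[OF lin_hmul_l] .
lemma hmul_zero_r[simp]: "hmul a 0 = 0" using lin_zero[OF lin_hmul_r] .
lemma hmul_zero_l[simp]: "hmul 0 b = 0" using lin_zero[OF lin_hmul_l] .

lemmas hmul_simps = hmul_add_r hmul_add_l hmul_diff_r hmul_diff_l hmul_smul_r hmul_smul_l

lemma hmul_nil_l[simp]: "hmul (basis []) a = a"
  by (rule lin_eqI[OF lin_hmul_r lin_id]) simp
lemma hmul_nil_r[simp]: "hmul a (basis []) = a"
  by (rule lin_eqI[OF lin_hmul_l lin_id]) simp

lemma hmul_assoc: "hmul (hmul a b) c = hmul a (hmul b c)"
proof -
  have "\<And>w. hmul (hmul a b) (basis w) = hmul a (hmul b (basis w))"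
  proof -
    fix w
    have "\<And>v. hmul (hmul a (basis v)) (basis w) = hmul a (hmul (basis v) (basis w))"
    proof -
      fix v
      show "hmul (hmul a (basis v)) (basis w) = hmul a (hmul (basis v) (basis w))"
        by (rule lin_eqI[OF lin_comp[OF lin_hmul_l lin_hmul_l] lin_hmul_l]) simp
    qed
    note H = this
    show "hmul (hmul a b) (basis w) = hmul a (hmul b (basis w))"
      by (rule lin_eqI[OF lin_comp[OF lin_hmul_l lin_hmul_r] lin_comp[OF lin_hmul_r lin_hmul_l]]) (rule H)
  qed
  note H = this
  show ?thesis
    by (rule lin_eqI[OF lin_hmul_r lin_comp[OF lin_hmul_r lin_hmul_r]]) (rule H)
qed

lemma lin_hshift: "lin (hshift s)" by (simp add: hshift_def[abs_def] lin_lext)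
lemma hshift_basis[simp]: "hshift s (basis w) = basis (map (\<lambda>i. i + s) w)"
  by (simp add: hshift_def)

lemma hshift_add: "hshift s (x + y) = hshift s x + hshift s y" using lin_add[OF lin_hshift] .
lemma hshift_diff: "hshift s (x - y) = hshift s x - hshift s y" using lin_diff[OF lin_hshift] .
lemma hshift_smul: "hshift s (smul c x) = smul c (hshift s x)" using lin_smul[OF lin_hshift] .

lemma hshift_hmul: "hshift s (hmul a b) = hmul (hshift s a) (hshift s b)"
proof -
  have "\<And>w. hshift s (hmul a (basis w)) = hmul (hshift s a) (hshift s (basis w))"
    by (rule lin_eqI[OF lin_comp[OF lin_hshift lin_hmul_l] lin_comp[OF lin_hmul_l lin_hshift]]) simp
  note H = this
  show ?thesis
    by (rule lin_eqI[OF lin_comp[OF lin_hshift lin_hmul_r] lin_comp[OF lin_hmul_r lin_hshift]]) (rule H)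
qed

lemma hshift_hshift: "hshift s (hshift t h) = hshift (s + t) h"
  by (rule lin_eqI[OF lin_comp[OF lin_hshift lin_hshift] lin_hshift]) (simp add: comp_def ac_simps)

lemma hshift_0: "hshift 0 h = h"
  by (rule lin_eqI[OF lin_hshift lin_id]) simp

definition cq :: K where "cq = qq - inverse qq"

lemma hTinv_cq: "hTinv k = hT k - smul cq (basis [])" by (simp add: hTinv_def cq_def)

lemma hshift_hT[simp]: "hshift s (hT k) = hT (k + s)" by (simp add: hT_def)
lemma hshift_hTinv[simp]: "hshift s (hTinv k) = hTinv (k + s)"
  by (simp add: hTinv_def hshift_diff hshift_smul hT_def)

definition pm1 :: "int \<Rightarrow> bool" where "pm1 e \<longleftrightarrow> e = 1 \<or> e = -1"

lemma pm1_gam[simp]: "pm1 (gam i j)" "pm1 (- gam i j)" by (auto simp: pm1_def gam_def)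

lemma hshift_hTpow: "pm1 e \<Longrightarrow> hshift s (hTpow k e) = hTpow (k + s) e"
  by (auto simp: pm1_def hTpow_def)

lemma hprod_Nil[simp]: "hprod [] = basis []" by (simp add: hprod_def)
lemma hprod_Cons[simp]: "hprod (x # xs) = hmul x (hprod xs)" by (simp add: hprod_def)

definition validh :: "helt \<Rightarrow> bool" where
  "validh h \<longleftrightarrow> (\<forall>w\<in>Poly_Mapping.keys h. valid_word w)"

lemma keys_sum_sub: "Poly_Mapping.keys (sum f S) \<subseteq> (\<Union>s\<in>S. Poly_Mapping.keys (f s))"
  by (rule keys_sum)

lemma keys_lext: "Poly_Mapping.keys (lext f x) \<subseteq> (\<Union>b\<in>Poly_Mapping.keys x. Poly_Mapping.keys (f b))"
proof -
  have "Poly_Mapping.keys (lext f x) \<subseteq> (\<Union>b\<in>Poly_Mapping.keys x. Poly_Mapping.keys (smul (Poly_Mapping.lookup x b) (f b)))"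
    unfolding lext_def by (rule keys_sum)
  also have "\<dots> \<subseteq> (\<Union>b\<in>Poly_Mapping.keys x. Poly_Mapping.keys (f b))"
    by (intro UN_mono subset_refl keys_smul)
  finally show ?thesis .
qed

lemma keys_diff: "Poly_Mapping.keys (x - y) \<subseteq> Poly_Mapping.keys x \<union> Poly_Mapping.keys y"
  by (auto simp: in_keys_iff lookup_minus)

lemma validh_basis[simp]: "validh (basis w) \<longleftrightarrow> valid_word w" by (simp add: validh_def)
lemma validh_zero[simp]: "validh 0" by (simp add: validh_def)
lemma validh_add: "validh x \<Longrightarrow> validh y \<Longrightarrow> validh (x + y)"
  unfolding validh_def using keys_add[of x y] by blast
lemma validh_diff: "validh x \<Longrightarrow> validh y \<Longrightarrow> validh (x - y)"
  unfolding validh_def using keys_diff[of x y] by blast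
lemma validh_smul: "validh x \<Longrightarrow> validh (smul c x)"
  unfolding validh_def using keys_smul[of c x] by blast
lemma validh_lext: "(\<And>b. b \<in> Poly_Mapping.keys x \<Longrightarrow> validh (f b)) \<Longrightarrow> validh (lext f x)"
  unfolding validh_def using keys_lext[of f x] by blast

lemma valid_word_append[simp]: "valid_word (v @ w) \<longleftrightarrow> valid_word v \<and> valid_word w"
  by (auto simp: valid_word_def)
lemma valid_word_Cons[simp]: "valid_word (k # w) \<longleftrightarrow> k \<noteq> 0 \<and> valid_word w"
  by (auto simp: valid_word_def)
lemma valid_word_Nil[simp]: "valid_word []" by (simp add: valid_word_def)

lemma validh_hmul: "validh a \<Longrightarrow> validh b \<Longrightarrow> validh (hmul a b)"
  unfolding hmul_lext by (intro validh_lext) (auto simp: validh_def)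

lemma validh_hshift: "validh a \<Longrightarrow> validh (hshift s a)"
  unfolding hshift_def by (intro validh_lext) (auto simp: validh_def valid_word_def)

lemma validh_hT: "1 \<le> k \<Longrightarrow> validh (hT k)" by (simp add: hT_def)
lemma validh_hTpow: "1 \<le> k \<Longrightarrow> pm1 e \<Longrightarrow> validh (hTpow k e)"
  by (auto simp: pm1_def hTpow_def hTinv_def hT_def intro!: validh_diff validh_smul)

lemma validh_hprod: "(\<And>x. x \<in> set xs \<Longrightarrow> validh x) \<Longrightarrow> validh (hprod xs)"
  by (induction xs) (auto intro: validh_hmul)

section \<open>The Hecke ideal\<close>

definition hgen :: "helt set" where
  "hgen = {hmul (basis a) (hmul r (basis b)) | a b r. valid_word a \<and> valid_word b \<and> r \<in> hecke_rels}"

definition HR :: "helt set" where "HR = kspan hgen"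

lemma hgen_I: "valid_word a \<Longrightarrow> valid_word b \<Longrightarrow> r \<in> hecke_rels \<Longrightarrow> hmul (basis a) (hmul r (basis b)) \<in> hgen"
  unfolding hgen_def by blast

lemma HR_gen: "valid_word a \<Longrightarrow> valid_word b \<Longrightarrow> r \<in> hecke_rels \<Longrightarrow> hmul (basis a) (hmul r (basis b)) \<in> HR"
  unfolding HR_def by (rule kspan_gen) (rule hgen_I)

lemma HR_rel: "r \<in> hecke_rels \<Longrightarrow> r \<in> HR"
  using HR_gen[of "[]" "[]" r] by simp

lemma HR_add: "x \<in> HR \<Longrightarrow> y \<in> HR \<Longrightarrow> x + y \<in> HR" unfolding HR_def by (rule kspan_add)
lemma HR_diff: "x \<in> HR \<Longrightarrow> y \<in> HR \<Longrightarrow> x - y \<in> HR" unfolding HR_def by (rule kspan_diff)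
lemma HR_smul: "x \<in> HR \<Longrightarrow> smul c x \<in> HR" unfolding HR_def by (rule kspan_smul)
lemma HR_zero: "0 \<in> HR" unfolding HR_def by (rule kspan.zero)

lemma HR_mult_left:
  assumes "validh c" "h \<in> HR" shows "hmul c h \<in> HR"
  using lin_hmul_r assms(2)[unfolded HR_def] unfolding HR_def
proof (rule kspan_lin_image)
  fix s assume "s \<in> hgen"
  then obtain a b r where s: "s = hmul (basis a) (hmul r (basis b))" "valid_word a" "valid_word b" "r \<in> hecke_rels"
    by (auto simp: hgen_def)
  have "hmul c s = lext (\<lambda>v. hmul (basis v) s) c"
    by (rule lin_expand[OF lin_hmul_l])
  also have "\<dots> \<in> kspan hgen"
  proof (rule kspan_lext)
    fix v assume "v \<in> Poly_Mapping.keys c"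
    then have "valid_word v" using assms(1) by (auto simp: validh_def)
    have "hmul (basis v) s = hmul (basis (v @ a)) (hmul r (basis b))"
      by (simp add: s(1) hmul_assoc[symmetric])
    then show "hmul (basis v) s \<in> kspan hgen"
      using s \<open>valid_word v\<close> hgen_I[of "v @ a" b r] by (simp add: kspan_gen)
  qed
  finally show "hmul c s \<in> kspan hgen" .
qed

lemma HR_mult_right:
  assumes "validh c" "h \<in> HR" shows "hmul h c \<in> HR"
  using lin_hmul_l assms(2)[unfolded HR_def] unfolding HR_def
proof (rule kspan_lin_image)
  fix s assume "s \<in> hgen"
  then obtain a b r where s: "s = hmul (basis a) (hmul r (basis b))" "valid_word a" "valid_word b" "r \<in> hecke_rels"
    by (auto simp: hgen_def)
  have "hmul s c = lext (\<lambda>v. hmul s (basis v)) c"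
    by (rule lin_expand[OF lin_hmul_r])
  also have "\<dots> \<in> kspan hgen"
  proof (rule kspan_lext)
    fix v assume "v \<in> Poly_Mapping.keys c"
    then have "valid_word v" using assms(1) by (auto simp: validh_def)
    have "hmul s (basis v) = hmul (basis a) (hmul r (basis (b @ v)))"
      by (simp add: s(1) hmul_assoc)
    then show "hmul s (basis v) \<in> kspan hgen"
      using s \<open>valid_word v\<close> hgen_I[of a "b @ v" r] by (simp add: kspan_gen)
  qed
  finally show "hmul s c \<in> kspan hgen" .
qed

lemma hecke_rels_shift: "r \<in> hecke_rels \<Longrightarrow> hshift s r \<in> hecke_rels"
proof -
  assume "r \<in> hecke_rels"
  then consider (a) i where "1 \<le> i" "r = basis [i, i] - smul (qq - inverse qq) (basis [i]) - basis []"
    | (b) i where "1 \<le> i" "r = basis [i, Suc i, i] - basis [Suc i, i, Suc i]"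
    | (c) i j where "1 \<le> i" "1 \<le> j" "i + 1 < j \<or> j + 1 < i" "r = basis [i, j] - basis [j, i]"
    unfolding hecke_rels_def by blast
  then show ?thesis
  proof cases
    case a then show ?thesis unfolding hecke_rels_def
      by (intro UnI1 UnI1 CollectI exI[of _ "i + s"]) (simp add: hshift_diff hshift_smul)
  next
    case b then show ?thesis unfolding hecke_rels_def
      by (intro UnI1 UnI2 CollectI exI[of _ "i + s"]) (simp add: hshift_diff)
  next
    case c then show ?thesis unfolding hecke_rels_def
      by (intro UnI2 CollectI exI[of _ "i + s"] exI[of _ "j + s"]) (auto simp: hshift_diff)
  qed
qed

lemma HR_shift: "h \<in> HR \<Longrightarrow> hshift s h \<in> HR"
  unfolding HR_def
proof (erule kspan_lin_image[OF lin_hshift])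
  fix g assume "g \<in> hgen"
  then obtain a b r where s: "g = hmul (basis a) (hmul r (basis b))" "valid_word a" "valid_word b" "r \<in> hecke_rels"
    by (auto simp: hgen_def)
  have "hshift s g = hmul (basis (map (\<lambda>i. i + s) a)) (hmul (hshift s r) (basis (map (\<lambda>i. i + s) b)))"
    by (simp add: s(1) hshift_hmul)
  moreover have "valid_word (map (\<lambda>i. i + s) a)" "valid_word (map (\<lambda>i. i + s) b)"
    using s by (auto simp: valid_word_def)
  ultimately show "hshift s g \<in> kspan hgen"
    using hecke_rels_shift[OF s(4)] hgen_I by (simp add: kspan_gen)
qed




section \<open>Tensor-level operators\<close>

lemma lin_tens: "lin (tens I)" by (simp add: tens_def[abs_def] lin_lext)
lemma tens_basis[simp]: "tens I (basis w) = basis (I, w)" by (simp add: tens_def)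
lemma tens_add: "tens I (x + y) = tens I x + tens I y" using lin_add[OF lin_tens] .
lemma tens_diff: "tens I (x - y) = tens I x - tens I y" using lin_diff[OF lin_tens] .
lemma tens_smul: "tens I (smul c x) = smul c (tens I x)" using lin_smul[OF lin_tens] .
lemma tens_zero[simp]: "tens I 0 = 0" using lin_zero[OF lin_tens] .

lemma lin_tensv: "lin (\<lambda>v. tensv v u)" by (simp add: tensv_def lin_lext)
lemma tensv_basis[simp]: "tensv (basis J) u = basis (J, u)" by (simp add: tensv_def)

lemma lin_Le: "lin (Le i)" by (simp add: Le_def lin_lext)
lemma Le_basis[simp]: "Le i (basis (I, u)) = basis (I @ [i], u)" by (simp add: Le_def)
lemma Le_add: "Le i (x + y) = Le i x + Le i y" using lin_add[OF lin_Le] .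
lemma Le_diff: "Le i (x - y) = Le i x - Le i y" using lin_diff[OF lin_Le] .
lemma Le_smul: "Le i (smul c x) = smul c (Le i x)" using lin_smul[OF lin_Le] .
lemma Le_zero[simp]: "Le i 0 = 0" using lin_zero[OF lin_Le] .
lemma Le_sum: "Le i (sum f S) = (\<Sum>s\<in>S. Le i (f s))" using lin_sum[OF lin_Le] .

lemma Le_tens: "Le a (tens I h) = tens (I @ [a]) h"
  by (rule lin_eqI[OF lin_comp[OF lin_Le lin_tens] lin_tens]) simp

lemma lin_Lh: "lin (Lh h)" by (simp add: Lh_def lin_lext)
lemma Lh_basis[simp]: "Lh h (basis (I, u)) = tens I (hmul (hshift (length I) h) (basis u))"
  by (simp add: Lh_def)
lemma Lh_add: "Lh h (x + y) = Lh h x + Lh h y" using lin_add[OF lin_Lh] .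
lemma Lh_diff: "Lh h (x - y) = Lh h x - Lh h y" using lin_diff[OF lin_Lh] .
lemma Lh_smul: "Lh h (smul c x) = smul c (Lh h x)" using lin_smul[OF lin_Lh] .
lemma Lh_zero[simp]: "Lh h 0 = 0" using lin_zero[OF lin_Lh] .
lemma Lh_sum: "Lh h (sum f S) = (\<Sum>s\<in>S. Lh h (f s))" using lin_sum[OF lin_Lh] .

lemma Lh_tens: "Lh h' (tens I h) = tens I (hmul (hshift (length I) h') h)"
  by (rule lin_eqI[OF lin_comp[OF lin_Lh lin_tens] lin_comp[OF lin_tens lin_hmul_r]]) simp

lemma Lh_alt: "Lh h x = lext (\<lambda>b. tens (fst b) (hmul (hshift (length (fst b)) h) (basis (snd b)))) x"
  by (simp add: Lh_def case_prod_unfold)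

lemma lin_Lh_h: "lin (\<lambda>h. Lh h x)"
  unfolding lin_def Lh_alt
  by (simp add: hshift_add hshift_smul hmul_add_l hmul_smul_l tens_add tens_smul lext_fun_add lext_fun_smul)

lemma Lh_add_h: "Lh (h1 + h2) x = Lh h1 x + Lh h2 x" using lin_add[OF lin_Lh_h] .
lemma Lh_diff_h: "Lh (h1 - h2) x = Lh h1 x - Lh h2 x" using lin_diff[OF lin_Lh_h] .
lemma Lh_smul_h: "Lh (smul c h) x = smul c (Lh h x)" using lin_smul[OF lin_Lh_h] .

lemma Lh_nil[simp]: "Lh (basis []) x = x"
  by (rule lin_eqI[OF lin_Lh lin_id]) auto

lemma Lh_mult: "Lh a (Lh b x) = Lh (hmul a b) x"
  by (rule lin_eqI[OF lin_comp[OF lin_Lh lin_Lh] lin_Lh])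
     (auto simp: Lh_tens hmul_assoc hshift_hmul)

lemma Lh_Le: "Lh h (Le a x) = Le a (Lh (hshift 1 h) x)"
  by (rule lin_eqI[OF lin_comp[OF lin_Lh lin_Le] lin_comp[OF lin_Le lin_Lh]])
     (auto simp: Le_tens hshift_hshift)

lemma lin_Kinv: "lin (Kinv m i)" by (simp add: Kinv_def lin_lext)
lemma Kinv_basis[simp]: "Kinv m i (basis (I, u)) = smul (inverse (qi m i) ^ count_list I i) (basis (I, u))"
  by (simp add: Kinv_def)

lemma Kinv_tens: "Kinv m i (tens I h) = smul (inverse (qi m i) ^ count_list I i) (tens I h)"
  by (rule lin_eqI[OF lin_comp[OF lin_Kinv lin_tens] lin_smulc[OF lin_tens]]) simp

lemma Kinv_Lh: "Kinv m i (Lh h x) = Lh h (Kinv m i x)"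
  by (rule lin_eqI[OF lin_comp[OF lin_Kinv lin_Lh] lin_comp[OF lin_Lh lin_Kinv]])
     (auto simp: Kinv_tens Lh_smul)

definition lsc :: "nat \<Rightarrow> nat \<Rightarrow> nat list \<Rightarrow> nat \<Rightarrow> K" where
  "lsc m j I k = (-1) ^ (par m j * (\<Sum>p\<in>{k+1..length I}. par m (I ! (p - 1))))
               * (\<Prod>p\<in>{1..<k}. if I ! (p - 1) = j then inverse (qi m j) else 1)"

definition lrem :: "nat list \<Rightarrow> nat \<Rightarrow> nat list" where
  "lrem I k = take (k - 1) I @ drop k I"

definition lH :: "nat \<Rightarrow> nat list \<Rightarrow> nat \<Rightarrow> helt" where
  "lH j I k = hprod (map (\<lambda>p. hTpow (p - 1) (- gam j (I ! (p - 1)))) (rev [k+1..<length I + 1]))"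

definition Lterm :: "nat \<Rightarrow> nat \<Rightarrow> nat list \<Rightarrow> helt \<Rightarrow> nat \<Rightarrow> tvec" where
  "Lterm m j I h k = (if I ! (k - 1) = j then smul (lsc m j I k) (tens (lrem I k) (hmul (lH j I k) h)) else 0)"

lemma lin_Lstar: "lin (Lstar m j)" by (simp add: Lstar_def lin_lext)

lemma Lstar_basis: "Lstar m j (basis (I, u)) = (\<Sum>k\<in>{1..length I}. Lterm m j I (basis u) k)"
  unfolding Lstar_def Lterm_def lsc_def lrem_def lH_def by simp

lemma lin_Lterm: "lin (\<lambda>h. Lterm m j I h k)"
  unfolding Lterm_def by (intro lin_if lin_smulc lin_comp[OF lin_tens lin_hmul_r] lin_const0)

lemma Lstar_tens: "Lstar m j (tens I h) = (\<Sum>k\<in>{1..length I}. Lterm m j I h k)"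
  by (rule lin_eqI[OF lin_comp[OF lin_Lstar lin_tens] lin_sumf[OF lin_Lterm]]) (simp add: Lstar_basis)




lemma validv_alt: "validv m n x \<longleftrightarrow> (\<forall>b\<in>Poly_Mapping.keys x. valid_idx m n (fst b) \<and> valid_word (snd b))"
  by (auto simp: validv_def)

lemma validv_lext: "(\<And>b. b \<in> Poly_Mapping.keys x \<Longrightarrow> validv m n (f b)) \<Longrightarrow> validv m n (lext f x)"
  unfolding validv_alt using keys_lext[of f x] by blast

lemma validv_basis[simp]: "validv m n (basis (I, u)) \<longleftrightarrow> valid_idx m n I \<and> valid_word u"
  by (simp add: validv_def)
lemma validv_zero[simp]: "validv m n 0" by (simp add: validv_def)
lemma validv_add: "validv m n x \<Longrightarrow> validv m n y \<Longrightarrow> validv m n (x + y)"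
  unfolding validv_alt using keys_add[of x y] by blast
lemma validv_diff: "validv m n x \<Longrightarrow> validv m n y \<Longrightarrow> validv m n (x - y)"
  unfolding validv_alt using keys_diff[of x y] by blast
lemma validv_smul: "validv m n x \<Longrightarrow> validv m n (smul c x)"
  unfolding validv_alt using keys_smul[of c x] by blast
lemma validv_sum: "(\<And>s. s \<in> S \<Longrightarrow> validv m n (f s)) \<Longrightarrow> validv m n (sum f S)"
  by (induction S rule: infinite_finite_induct) (auto intro: validv_add)

lemma validv_expand:
  assumes "lin g" "\<And>I u. valid_idx m n I \<Longrightarrow> valid_word u \<Longrightarrow> validv m' n' (g (basis (I, u)))"
    "validv m n x"
  shows "validv m' n' (g x)"
proof -
  have e: "g x = lext (\<lambda>b. g (basis b)) x" by (rule lin_expand[OF assms(1)])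
  show ?thesis unfolding e
  proof (rule validv_lext)
    fix b assume "b \<in> Poly_Mapping.keys x"
    then obtain I u where b: "b = (I, u)" "valid_idx m n I" "valid_word u"
      using assms(3) by (cases b) (auto simp: validv_def)
    show "validv m' n' (g (basis b))" using assms(2)[OF b(2,3)] b(1) by simp
  qed
qed

lemma validv_tens: "valid_idx m n I \<Longrightarrow> validh h \<Longrightarrow> validv m n (tens I h)"
  unfolding tens_def by (rule validv_lext) (auto simp: validh_def)

lemma valid_idx_append[simp]: "valid_idx m n (I @ J) \<longleftrightarrow> valid_idx m n I \<and> valid_idx m n J"
  by (auto simp: valid_idx_def)
lemma valid_idx_single[simp]: "valid_idx m n [a] \<longleftrightarrow> a \<in> {1..m+n}"
  by (auto simp: valid_idx_def)
lemma valid_idx_lrem: "valid_idx m n I \<Longrightarrow> valid_idx m n (lrem I k)"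
  unfolding valid_idx_def lrem_def using set_take_subset set_drop_subset by fastforce

lemma validv_Le: "a \<in> {1..m+n} \<Longrightarrow> validv m n x \<Longrightarrow> validv m n (Le a x)"
  by (rule validv_expand[OF lin_Le]) auto

lemma validv_Lh: "validh h \<Longrightarrow> validv m n x \<Longrightarrow> validv m n (Lh h x)"
  by (rule validv_expand[OF lin_Lh]) (auto intro!: validv_tens validh_hmul validh_hshift)

lemma validv_Kinv: "validv m n x \<Longrightarrow> validv m n (Kinv m' i x)"
  by (rule validv_expand[OF lin_Kinv]) (auto intro!: validv_smul)

lemma validh_lH: "1 \<le> k \<Longrightarrow> validh (lH j I k)"
  unfolding lH_def by (rule validh_hprod) (auto intro!: validh_hTpow)

lemma validv_Lterm: "valid_idx m n I \<Longrightarrow> validh h \<Longrightarrow> 1 \<le> k \<Longrightarrow> validv m n (Lterm m' j I h k)"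
  unfolding Lterm_def by (auto intro!: validv_smul validv_tens valid_idx_lrem validh_hmul validh_lH)

lemma validv_Lstar: "validv m n x \<Longrightarrow> validv m n (Lstar m' j x)"
  by (rule validv_expand[OF lin_Lstar]) (auto simp: Lstar_basis intro!: validv_sum validv_Lterm)

section \<open>Relation space\<close>

lemma Rel_add: "x \<in> Rel m n \<Longrightarrow> y \<in> Rel m n \<Longrightarrow> x + y \<in> Rel m n" unfolding Rel_def by (rule kspan_add)
lemma Rel_diff: "x \<in> Rel m n \<Longrightarrow> y \<in> Rel m n \<Longrightarrow> x - y \<in> Rel m n" unfolding Rel_def by (rule kspan_diff)
lemma Rel_smul: "x \<in> Rel m n \<Longrightarrow> smul c x \<in> Rel m n" unfolding Rel_def by (rule kspan_smul)
lemma Rel_zero: "0 \<in> Rel m n" unfolding Rel_def by (rule kspan.zero)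
lemma Rel_sum: "(\<And>s. s \<in> S \<Longrightarrow> f s \<in> Rel m n) \<Longrightarrow> sum f S \<in> Rel m n" unfolding Rel_def by (rule kspan_sum)
lemma Rel_gen: "s \<in> relgen m n \<Longrightarrow> s \<in> Rel m n" unfolding Rel_def by (rule kspan_gen)

lemma relgen_I1: "valid_idx m n I \<Longrightarrow> valid_word a \<Longrightarrow> valid_word b \<Longrightarrow> r \<in> hecke_rels
  \<Longrightarrow> tens I (hmul (basis a) (hmul r (basis b))) \<in> relgen m n"
  unfolding relgen_def by blast
lemma relgen_I2: "valid_idx m n I \<Longrightarrow> valid_word u \<Longrightarrow> 1 \<le> k \<Longrightarrow> k < length I
  \<Longrightarrow> tensv (actT m I k) u - basis (I, k # u) \<in> relgen m n"
  unfolding relgen_def by blast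

lemma Rel_tens: assumes "valid_idx m n I" "h \<in> HR" shows "tens I h \<in> Rel m n"
  using lin_tens assms(2)[unfolded HR_def] unfolding Rel_def
proof (rule kspan_lin_image)
  fix s assume "s \<in> hgen"
  then show "tens I s \<in> kspan (relgen m n)"
    using assms(1) by (auto simp: hgen_def intro!: kspan_gen relgen_I1)
qed

lemma Le_tensv: "Le a (tensv v u) = tensv (lext (\<lambda>J. basis (J @ [a])) v) u"
  by (rule lin_eqI[OF lin_comp[OF lin_Le lin_tensv] lin_comp[OF lin_tensv lin_lext]]) simp

lemma actT_append:
  assumes "1 \<le> k" "k < length I"
  shows "lext (\<lambda>J. basis (J @ [a])) (actT m I k) = actT m (I @ [a]) k"
proof -
  have e: "(I @ [a]) ! (k - 1) = I ! (k - 1)" "(I @ [a]) ! k = I ! k"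
    using assms by (auto simp: nth_append)
  have kk: "k - 1 < length I" using assms by simp
  have u: "(I @ [a])[k - 1 := x, k := y] = I[k - 1 := x, k := y] @ [a]" for x y
    using assms kk by (simp add: list_update_append)
  show ?thesis
    unfolding actT_def Let_def e u by (simp add: lext_add lext_smul)
qed

lemma Rel_Le: assumes "a \<in> {1..m+n}" "z \<in> Rel m n" shows "Le a z \<in> Rel m n"
  using lin_Le assms(2)[unfolded Rel_def] unfolding Rel_def
proof (rule kspan_lin_image)
  fix s assume "s \<in> relgen m n"
  then consider (a) I a' b r where "s = tens I (hmul (basis a') (hmul r (basis b)))"
      "valid_idx m n I" "valid_word a'" "valid_word b" "r \<in> hecke_rels"
    | (b) I k u where "s = tensv (actT m I k) u - basis (I, k # u)" "valid_idx m n I" "valid_word u" "1 \<le> k" "k < length I"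
    unfolding relgen_def by blast
  then show "Le a s \<in> kspan (relgen m n)"
  proof cases
    case a
    then show ?thesis using assms(1) by (simp add: Le_tens kspan_gen relgen_I1)
  next
    case b
    have "Le a s = tensv (actT m (I @ [a]) k) u - basis (I @ [a], k # u)"
      using b by (simp add: Le_diff Le_tensv actT_append)
    then show ?thesis using assms(1) b by (simp add: kspan_gen relgen_I2)
  qed
qed

lemma word_comm:
  assumes "1 \<le> k" "\<forall>x\<in>set v. k + 1 < x" "valid_word u"
  shows "basis (k # v @ u) - basis (v @ k # u) \<in> HR"
  using assms(2)
proof (induction v)
  case Nil then show ?case by (simp add: HR_zero)
next
  case (Cons x v)
  have r: "basis [k, x] - basis [x, k] \<in> hecke_rels"
    unfolding hecke_rels_def
    by (rule UnI2, rule CollectI, rule exI[of _ k], rule exI[of _ x]) (use Cons.prems assms(1) in auto)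
  have vx: "valid_word (v @ u)" using Cons.prems assms(3) by (auto simp: valid_word_def)
  have 1: "basis (k # x # v @ u) - basis (x # k # v @ u) \<in> HR"
    using HR_gen[OF valid_word_Nil vx r] by (simp add: hmul_diff_l)
  have 2: "basis (x # k # v @ u) - basis (x # v @ k # u) \<in> HR"
    using HR_mult_left[of "basis [x]", OF _ Cons.IH] Cons.prems by (simp add: hmul_diff_r)
  show ?case using HR_add[OF 1 2] by simp
qed

lemma Lh_tensv_basis:
  assumes "\<And>J. J \<in> Poly_Mapping.keys v \<Longrightarrow> length J = d"
  shows "Lh (basis w) (tensv v u) = tensv v (map (\<lambda>i. i + d) w @ u)"
proof -
  have "Lh (basis w) (tensv v u) = lext (\<lambda>J. basis (J, map (\<lambda>i. i + length J) w @ u)) v"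
    by (rule lin_eqI[OF lin_comp[OF lin_Lh lin_tensv] lin_lext]) simp
  also have "\<dots> = tensv v (map (\<lambda>i. i + d) w @ u)"
    unfolding tensv_def by (rule lext_cong) (simp add: assms)
  finally show ?thesis .
qed

lemma keys_actT: "J \<in> Poly_Mapping.keys (actT m I k) \<Longrightarrow> length J = length I"
  unfolding actT_def Let_def
  using keys_smul keys_add by (auto split: if_splits dest!: subsetD[OF keys_add] subsetD[OF keys_smul])

lemma Rel_Lh: assumes "validh h" "z \<in> Rel m n" shows "Lh h z \<in> Rel m n"
  using lin_Lh assms(2)[unfolded Rel_def] unfolding Rel_def
proof (rule kspan_lin_image)
  fix s assume "s \<in> relgen m n"
  then consider (a) I a' b r where "s = tens I (hmul (basis a') (hmul r (basis b)))"
      "valid_idx m n I" "valid_word a'" "valid_word b" "r \<in> hecke_rels"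
    | (b) I k u where "s = tensv (actT m I k) u - basis (I, k # u)" "valid_idx m n I" "valid_word u" "1 \<le> k" "k < length I"
    unfolding relgen_def by blast
  then show "Lh h s \<in> kspan (relgen m n)"
  proof cases
    case a
    have "hmul (hshift (length I) h) (hmul (basis a') (hmul r (basis b))) \<in> HR"
      using a assms(1) by (intro HR_mult_left validh_hshift HR_gen)
    then show ?thesis using a Rel_tens[of m n I] by (simp add: Lh_tens Rel_def)
  next
    case b
    have "Lh h s = lext (\<lambda>w. Lh (basis w) s) h" by (rule lin_expand[OF lin_Lh_h])
    also have "\<dots> \<in> kspan (relgen m n)"
    proof (rule kspan_lext)
      fix w assume "w \<in> Poly_Mapping.keys h"
      then have w: "valid_word w" using assms(1) by (auto simp: validh_def)
      define sw where "sw = map (\<lambda>i. i + length I) w"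
      have sw1: "valid_word sw" using w by (auto simp: sw_def valid_word_def)
      have sw2: "\<forall>x\<in>set sw. k + 1 < x"
      proof
        fix x assume "x \<in> set sw"
        then obtain y where y: "y \<in> set w" "x = y + length I" by (auto simp: sw_def)
        have "y \<noteq> 0"
        proof
          assume "y = 0" with y(1) w show False by (simp add: valid_word_def)
        qed
        with b(5) y(2) show "k + 1 < x" by simp
      qed
      note sw = sw1 sw2
      have "Lh (basis w) s = (tensv (actT m I k) (sw @ u) - basis (I, k # sw @ u))
              + tens I (basis (k # sw @ u) - basis (sw @ k # u))"
        using b by (simp add: Lh_diff Lh_tensv_basis keys_actT sw_def tens_diff)
      moreover have "tensv (actT m I k) (sw @ u) - basis (I, k # sw @ u) \<in> kspan (relgen m n)"
        using b sw by (simp add: kspan_gen relgen_I2)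
      moreover have "tens I (basis (k # sw @ u) - basis (sw @ k # u)) \<in> kspan (relgen m n)"
        using Rel_tens[OF b(2) word_comm[OF b(4) sw(2) b(3)]] by (simp add: Rel_def)
      ultimately show "Lh (basis w) s \<in> kspan (relgen m n)" by (simp add: kspan_add)
    qed
    finally show ?thesis .
  qed
qed

lemma Lh_HR: assumes "validv m n x" "h \<in> HR" shows "Lh h x \<in> Rel m n"
proof -
  have "Lh h x = lext (\<lambda>b. Lh h (basis b)) x" by (rule lin_expand[OF lin_Lh])
  also have "\<dots> \<in> Rel m n" unfolding Rel_def
  proof (rule kspan_lext)
    fix b assume "b \<in> Poly_Mapping.keys x"
    then obtain I u where b: "b = (I, u)" "valid_idx m n I" "valid_word u"
      using assms(1) by (cases b) (auto simp: validv_def)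
    show "Lh h (basis b) \<in> kspan (relgen m n)"
      using Rel_tens[OF b(2) HR_mult_right[OF _ HR_shift[OF assms(2)]], of "basis u"] b
      by (simp add: Rel_def)
  qed
  finally show ?thesis .
qed

lemma Rel_lin_expand:
  assumes "lin g" "lin h" "validv m n x"
    "\<And>I u. valid_idx m n I \<Longrightarrow> valid_word u \<Longrightarrow> g (basis (I, u)) - h (basis (I, u)) \<in> Rel m n"
  shows "g x - h x \<in> Rel m n"
  unfolding Rel_def
proof (rule kspan_lin_diff[OF assms(1,2)])
  fix b assume "b \<in> Poly_Mapping.keys x"
  then obtain I u where b: "b = (I, u)" "valid_idx m n I" "valid_word u"
    using assms(3) by (cases b) (auto simp: validv_def)
  show "g (basis b) - h (basis b) \<in> kspan (relgen m n)" using assms(4)[OF b(2,3)] b by (simp add: Rel_def)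
qed




lemma nth_snoc_lt: "p < length I \<Longrightarrow> (I @ [a]) ! p = I ! p" by (simp add: nth_append)

lemma lsc_snoc:
  assumes "1 \<le> k" "k \<le> length I"
  shows "lsc m j (I @ [a]) k = psign m j a * lsc m j I k"
proof -
  have s: "(\<Sum>p\<in>{k+1..length (I @ [a])}. par m ((I @ [a]) ! (p - 1)))
         = (\<Sum>p\<in>{k+1..length I}. par m (I ! (p - 1))) + par m a"
  proof -
    have "{k+1..length (I @ [a])} = insert (length I + 1) {k+1..length I}" using assms by auto
    then have "(\<Sum>p\<in>{k+1..length (I @ [a])}. par m ((I @ [a]) ! (p - 1)))
       = par m a + (\<Sum>p\<in>{k+1..length I}. par m ((I @ [a]) ! (p - 1)))" by simp
    also have "(\<Sum>p\<in>{k+1..length I}. par m ((I @ [a]) ! (p - 1))) = (\<Sum>p\<in>{k+1..length I}. par m (I ! (p - 1)))"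
      by (rule sum.cong) (auto simp: nth_append)
    finally show ?thesis by simp
  qed
  have pr: "(\<Prod>p\<in>{1..<k}. if (I @ [a]) ! (p - 1) = j then inverse (qi m j) else 1)
          = (\<Prod>p\<in>{1..<k}. if I ! (p - 1) = j then inverse (qi m j) else 1)"
    by (rule prod.cong) (use assms in \<open>auto simp: nth_append\<close>)
  show ?thesis unfolding lsc_def s pr psign_def
    by (simp add: distrib_left power_add mult_ac)
qed

lemma lrem_snoc: "1 \<le> k \<Longrightarrow> k \<le> length I \<Longrightarrow> lrem (I @ [a]) k = lrem I k @ [a]"
  by (simp add: lrem_def)

lemma length_lrem: "1 \<le> k \<Longrightarrow> k \<le> length I \<Longrightarrow> length (lrem I k) = length I - 1"
  by (simp add: lrem_def)

lemma lH_snoc: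
  assumes "1 \<le> k" "k \<le> length I"
  shows "lH j (I @ [a]) k = hmul (hTpow (length I) (- gam j a)) (lH j I k)"
proof -
  have r: "rev [k+1..<length (I @ [a]) + 1] = (length I + 1) # rev [k+1..<length I + 1]"
    using assms by (simp add: upt_Suc_append)
  have m: "map (\<lambda>p. hTpow (p - 1) (- gam j ((I @ [a]) ! (p - 1)))) (rev [k+1..<length I + 1])
         = map (\<lambda>p. hTpow (p - 1) (- gam j (I ! (p - 1)))) (rev [k+1..<length I + 1])"
    by (rule map_cong) (auto simp: nth_append)
  show ?thesis unfolding lH_def r list.map(2) hprod_Cons m by (simp add: nth_append)
qed

lemma LT1pow_tens: "pm1 e \<Longrightarrow> LT1pow e (tens I h) = tens I (hmul (hTpow (length I + 1) e) h)"
  by (simp add: LT1pow_def Lh_tens hshift_hTpow)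

lemma Lterm_snoc:
  assumes "1 \<le> k" "k \<le> length I"
  shows "Lterm m j (I @ [a]) h k = smul (psign m j a) (Le a (LT1pow (- gam j a) (Lterm m j I h k)))"
proof -
  have kk: "k - 1 < length I" using assms by simp
  have l: "Suc (length (lrem I k)) = length I" using assms by (simp add: length_lrem)
  have e: "(I @ [a]) ! (k - Suc 0) = I ! (k - Suc 0)" using kk by (simp add: nth_append)
  show ?thesis
  proof (cases "I ! (k - 1) = j")
    case True
    then show ?thesis
      using assms
      by (simp add: Lterm_def e lsc_snoc lrem_snoc lH_snoc LT1pow_def Lh_smul Lh_tens
          Le_smul Le_tens hshift_hTpow l hmul_assoc)
  next
    case False
    then show ?thesis by (simp add: Lterm_def e LT1pow_def)
  qed
qed

lemma prod_count: "(\<Prod>p\<in>{1..<length I + 1}. if I ! (p - 1) = j then c else 1) = (c::K) ^ count_list I j"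
proof (induction I rule: rev_induct)
  case Nil then show ?case by simp
next
  case (snoc x I)
  have eq: "{1..<length (I @ [x]) + 1} = insert (length I + 1) {1..<length I + 1}" by auto
  have nin: "length I + 1 \<notin> {1..<length I + 1}" by simp
  have "(\<Prod>p\<in>{1..<length (I @ [x]) + 1}. if (I @ [x]) ! (p - 1) = j then c else 1)
     = (if (I @ [x]) ! (length I + 1 - 1) = j then c else 1) * (\<Prod>p\<in>{1..<length I + 1}. if (I @ [x]) ! (p - 1) = j then c else 1)"
    by (simp only: eq prod.insert[OF finite_atLeastLessThan nin])
  also have "(if (I @ [x]) ! (length I + 1 - 1) = j then c else 1) = (if x = j then c else 1)"
    by simp
  also have "(\<Prod>p\<in>{1..<length I + 1}. if (I @ [x]) ! (p - 1) = j then c else 1)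
     = (\<Prod>p\<in>{1..<length I + 1}. if I ! (p - 1) = j then c else 1)"
    by (rule prod.cong) (auto simp: nth_append)
  also have "\<dots> = c ^ count_list I j" by (rule snoc.IH)
  also have "(if x = j then c else 1) * c ^ count_list I j = c ^ count_list (I @ [x]) j" by simp
  finally show ?case .
qed

lemma Lterm_last:
  "Lterm m j (I @ [a]) h (length I + 1) = (if a = j then smul (inverse (qi m j) ^ count_list I j) (tens I h) else 0)"
proof -
  have P: "(\<Prod>p\<in>{1..<length I + 1}. if (I @ [a]) ! (p - 1) = j then inverse (qi m j) else 1)
        = inverse (qi m j) ^ count_list I j"
  proof -
    have "(\<Prod>p\<in>{1..<length I + 1}. if (I @ [a]) ! (p - 1) = j then inverse (qi m j) else 1)
        = (\<Prod>p\<in>{1..<length I + 1}. if I ! (p - 1) = j then inverse (qi m j) else 1)"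
      by (rule prod.cong) (auto simp: nth_append)
    then show ?thesis using prod_count[of I j "inverse (qi m j)"] by simp
  qed
  have S: "{length I + 1 + 1..length (I @ [a])} = {}" by simp
  have "lsc m j (I @ [a]) (length I + 1) = inverse (qi m j) ^ count_list I j"
    unfolding lsc_def S P by simp
  moreover have "lrem (I @ [a]) (length I + 1) = I" by (simp add: lrem_def)
  moreover have "lH j (I @ [a]) (length I + 1) = basis []" by (simp add: lH_def)
  moreover have "(I @ [a]) ! (length I + 1 - 1) = a" by simp
  ultimately show ?thesis by (cases "a = j") (simp_all add: Lterm_def)
qed

lemma lin_LT1pow: "lin (LT1pow e)" by (simp add: LT1pow_def lin_Lh)

section \<open>Relation (3), exactly\<close>

lemma R3:
  "Lstar m j (Le a x) = (if a = j then Kinv m j x else 0)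
     + smul (psign m j a) (Le a (LT1pow (- gam j a) (Lstar m j x)))"
proof -
  have L1: "lin (\<lambda>x. Lstar m j (Le a x))" by (rule lin_comp[OF lin_Lstar lin_Le])
  have L2: "lin (\<lambda>x. (if a = j then Kinv m j x else 0)
     + smul (psign m j a) (Le a (LT1pow (- gam j a) (Lstar m j x))))"
    by (rule lin_plus[OF lin_if[OF lin_Kinv lin_const0] lin_smulc[OF lin_comp[OF lin_Le lin_comp[OF lin_LT1pow lin_Lstar]]]])
  show ?thesis
  proof (rule lin_eqI[OF L1 L2])
  fix b :: "nat list \<times> hword"
  obtain I u where b: "b = (I, u)" by (cases b)
  have split: "{1..length (I @ [a])} = insert (length I + 1) {1..length I}" by auto
  have "Lstar m j (Le a (basis b)) = (\<Sum>k\<in>{1..length I}. Lterm m j (I @ [a]) (basis u) k)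
        + Lterm m j (I @ [a]) (basis u) (length I + 1)"
    by (simp add: b Lstar_basis split add.commute)
  also have "(\<Sum>k\<in>{1..length I}. Lterm m j (I @ [a]) (basis u) k)
     = smul (psign m j a) (Le a (LT1pow (- gam j a) (Lstar m j (basis b))))"
    by (simp add: b Lstar_basis Lterm_snoc smul_sum Le_sum LT1pow_def Lh_sum)
  finally show "Lstar m j (Le a (basis b)) = (if a = j then Kinv m j (basis b) else 0)
     + smul (psign m j a) (Le a (LT1pow (- gam j a) (Lstar m j (basis b))))"
    using Lterm_last[of m j I a "basis u"] by (cases "a = j") (simp_all add: b add.commute)
  qed
qed




lemma teq_refl: "teq m n x x" by (simp add: teq_def Rel_zero)
lemma teq_eq: "x = y \<Longrightarrow> teq m n x y" by (simp add: teq_refl)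
lemma teq_trans[trans]: "teq m n x y \<Longrightarrow> teq m n y z \<Longrightarrow> teq m n x z"
  unfolding teq_def using Rel_add by fastforce
lemma teq_trans_eq1[trans]: "x = y \<Longrightarrow> teq m n y z \<Longrightarrow> teq m n x z" by simp
lemma teq_trans_eq2[trans]: "teq m n x y \<Longrightarrow> y = z \<Longrightarrow> teq m n x z" by simp
lemma teq_sym: "teq m n x y \<Longrightarrow> teq m n y x"
  unfolding teq_def using Rel_smul[of "x - y" m n "-1"] by (simp add: smul_m1)
lemma teq_smul: "teq m n x y \<Longrightarrow> teq m n (smul c x) (smul c y)"
  unfolding teq_def using Rel_smul by (fastforce simp: smul_diff[symmetric])
lemma teq_add: "teq m n x y \<Longrightarrow> teq m n x' y' \<Longrightarrow> teq m n (x + x') (y + y')"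
  unfolding teq_def using Rel_add by (fastforce simp: algebra_simps)
lemma teq_Le: "a \<in> {1..m+n} \<Longrightarrow> teq m n x y \<Longrightarrow> teq m n (Le a x) (Le a y)"
  unfolding teq_def using Rel_Le by (fastforce simp: Le_diff[symmetric])
lemma teq_Lh: "validh h \<Longrightarrow> teq m n x y \<Longrightarrow> teq m n (Lh h x) (Lh h y)"
  unfolding teq_def using Rel_Lh by (fastforce simp: Lh_diff[symmetric])
lemma teq_Lh_HR: "validv m n x \<Longrightarrow> h - h' \<in> HR \<Longrightarrow> teq m n (Lh h x) (Lh h' x)"
  unfolding teq_def using Lh_HR by (fastforce simp: Lh_diff_h[symmetric])

lemma psign_sq: "psign m i j * psign m i j = 1"
  by (simp add: psign_def power_add[symmetric])
lemma psign_sym: "psign m i j = psign m j i" by (simp add: psign_def mult.commute)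
lemma qi_nz: "qi m i \<noteq> 0" by (simp add: qi_def qq_nz)
lemma gam_swap: "i \<noteq> j \<Longrightarrow> gam j i = - gam i j" by (simp add: gam_def)
lemma gam_eq: "gam i i = -1" by (simp add: gam_def)

lemma Lstar_add: "Lstar m j (x + y) = Lstar m j x + Lstar m j y" using lin_add[OF lin_Lstar] .
lemma Lstar_smul: "Lstar m j (smul c x) = smul c (Lstar m j x)" using lin_smul[OF lin_Lstar] .
lemma Lstar_zero[simp]: "Lstar m j 0 = 0" using lin_zero[OF lin_Lstar] .
lemma Lstar_sum: "Lstar m j (sum f S) = (\<Sum>s\<in>S. Lstar m j (f s))" using lin_sum[OF lin_Lstar] .
lemma LT_add: "LT1pow e (x + y) = LT1pow e x + LT1pow e y" using lin_add[OF lin_LT1pow] .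
lemma LT_smul: "LT1pow e (smul c x) = smul c (LT1pow e x)" using lin_smul[OF lin_LT1pow] .
lemma LT_zero[simp]: "LT1pow e 0 = 0" using lin_zero[OF lin_LT1pow] .
lemma Kinv_add: "Kinv m j (x + y) = Kinv m j x + Kinv m j y" using lin_add[OF lin_Kinv] .
lemma Kinv_smul: "Kinv m j (smul c x) = smul c (Kinv m j x)" using lin_smul[OF lin_Kinv] .
lemma Kinv_zero[simp]: "Kinv m j 0 = 0" using lin_zero[OF lin_Kinv] .
lemma Kinv_sum: "Kinv m j (sum f S) = (\<Sum>s\<in>S. Kinv m j (f s))" using lin_sum[OF lin_Kinv] .
lemma Kinv_LT: "Kinv m j (LT1pow e x) = LT1pow e (Kinv m j x)" by (simp add: LT1pow_def Kinv_Lh)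

lemma validv_LT: "pm1 e \<Longrightarrow> validv m n x \<Longrightarrow> validv m n (LT1pow e x)"
  unfolding LT1pow_def by (rule validv_Lh) (auto intro: validh_hTpow)

lemma count_lrem:
  assumes "1 \<le> k" "k \<le> length I"
  shows "count_list I j = count_list (lrem I k) j + (if I ! (k - 1) = j then 1 else 0)"
proof -
  have "I = take (k - 1) I @ I ! (k - 1) # drop k I"
    using id_take_nth_drop[of "k - 1" I] assms by simp
  then have "count_list I j = count_list (take (k - 1) I @ I ! (k - 1) # drop k I) j" by simp
  then show ?thesis by (simp add: lrem_def)
qed

lemma Kinv_Lterm: "Kinv m j (Lterm m' i I h k) = smul (inverse (qi m j) ^ count_list (lrem I k) j) (Lterm m' i I h k)"
  by (simp add: Lterm_def Kinv_smul Kinv_tens mult.commute)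

lemma Lstar_Kinv:
  "Lstar m i (Kinv m j x) = smul (if i = j then inverse (qi m j) else 1) (Kinv m j (Lstar m i x))"
proof (rule lin_eqI[OF lin_comp[OF lin_Lstar lin_Kinv] lin_smulc[OF lin_comp[OF lin_Kinv lin_Lstar]]])
  fix b :: "nat list \<times> hword"
  obtain I u where b: "b = (I, u)" by (cases b)
  have "Lstar m i (Kinv m j (basis b)) = (\<Sum>k\<in>{1..length I}. smul (inverse (qi m j) ^ count_list I j) (Lterm m i I (basis u) k))"
    by (simp add: b Lstar_smul Lstar_basis smul_sum)
  also have "\<dots> = (\<Sum>k\<in>{1..length I}. smul (if i = j then inverse (qi m j) else 1) (Kinv m j (Lterm m i I (basis u) k)))"
  proof (rule sum.cong[OF refl])
    fix k assume k: "k \<in> {1..length I}"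
    show "smul (inverse (qi m j) ^ count_list I j) (Lterm m i I (basis u) k)
        = smul (if i = j then inverse (qi m j) else 1) (Kinv m j (Lterm m i I (basis u) k))"
    proof (cases "I ! (k - 1) = i")
      case True
      then show ?thesis using count_lrem[of k I j] k
        by (auto simp: Kinv_Lterm power_add mult.commute)
    next
      case False
      then show ?thesis by (simp add: Lterm_def)
    qed
  qed
  also have "\<dots> = smul (if i = j then inverse (qi m j) else 1) (Kinv m j (Lstar m i (basis b)))"
    by (simp add: b Lstar_basis Kinv_sum smul_sum)
  finally show "Lstar m i (Kinv m j (basis b)) = smul (if i = j then inverse (qi m j) else 1) (Kinv m j (Lstar m i (basis b)))" .
qed

lemma Q_rel: "1 \<le> k \<Longrightarrow> basis [k, k] - smul cq (basis [k]) - basis [] \<in> hecke_rels"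
  unfolding hecke_rels_def cq_def by blast

lemma HR_inv:
  assumes "pm1 e" shows "hmul (hTpow 1 e) (hTpow 1 (- e)) - basis [] \<in> HR"
proof -
  have "hmul (hTpow 1 e) (hTpow 1 (- e)) - basis [] = basis [1, 1] - smul cq (basis [1]) - basis []"
    using assms by (auto simp: pm1_def hTpow_def hTinv_cq hT_def hmul_simps)
  then show ?thesis using HR_rel[OF Q_rel[of 1]] by simp
qed

lemma LT_inv: "pm1 e \<Longrightarrow> validv m n z \<Longrightarrow> teq m n (LT1pow e (LT1pow (- e) z)) z"
  using teq_Lh_HR[OF _ HR_inv, of m n z e] by (simp add: LT1pow_def Lh_mult)

definition hcomm :: "helt \<Rightarrow> helt \<Rightarrow> bool" where
  "hcomm a b \<longleftrightarrow> hmul a b - hmul b a \<in> HR"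

lemma hcomm_hprod:
  assumes "\<And>x. x \<in> set L \<Longrightarrow> validh x \<and> hcomm x t"
  shows "hcomm (hprod L) t"
  using assms
proof (induction L)
  case Nil then show ?case by (simp add: hcomm_def HR_zero)
next
  case (Cons x L)
  have x: "validh x" "hcomm x t" using Cons.prems by auto
  have P: "validh (hprod L)" using Cons.prems by (auto intro: validh_hprod)
  have IH: "hcomm (hprod L) t" using Cons by auto
  have e: "hmul (hprod (x # L)) t - hmul t (hprod (x # L))
      = hmul x (hmul (hprod L) t - hmul t (hprod L)) + hmul (hmul x t - hmul t x) (hprod L)"
    by (simp add: hmul_simps hmul_assoc)
  show ?case unfolding hcomm_def e
    using HR_add[OF HR_mult_left[OF x(1) IH[unfolded hcomm_def]] HR_mult_right[OF P x(2)[unfolded hcomm_def]]] .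
qed

lemma hcomm_T_T: "1 \<le> k \<Longrightarrow> k + 1 < N \<Longrightarrow> hcomm (hT k) (hT N)"
  unfolding hcomm_def hT_def
  by (rule HR_rel, unfold hecke_rels_def, rule UnI2, rule CollectI, rule exI[of _ k], rule exI[of _ N]) auto

lemma hcomm_pow_l: "pm1 e \<Longrightarrow> hcomm (hT k) b \<Longrightarrow> hcomm (hTpow k e) b"
  by (auto simp: hcomm_def pm1_def hTpow_def hTinv_cq hmul_simps)
lemma hcomm_sym: "hcomm a b \<Longrightarrow> hcomm b a"
  unfolding hcomm_def using HR_smul[of _ "-1"] by (fastforce simp: smul_m1)

lemma hcomm_pows: "1 \<le> k \<Longrightarrow> k + 1 < N \<Longrightarrow> pm1 e \<Longrightarrow> pm1 e' \<Longrightarrow> hcomm (hTpow k e) (hTpow N e')"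
  apply (rule hcomm_pow_l, assumption)
  apply (rule hcomm_sym, rule hcomm_pow_l, assumption)
  apply (rule hcomm_sym, rule hcomm_T_T)
  by simp_all

lemma hcomm_lH:
  assumes "1 \<le> k" "k \<le> length I" "pm1 e"
  shows "hcomm (lH j I k) (hTpow (length I + 1) e)"
  unfolding lH_def
  by (rule hcomm_hprod) (use assms in \<open>auto intro!: validh_hTpow hcomm_pows\<close>)

lemma Lstar_LT:
  assumes "pm1 e" "validv m n w"
  shows "teq m n (Lstar m' i (LT1pow e w)) (Lh (hTpow 2 e) (Lstar m' i w))"
  unfolding teq_def
proof (rule Rel_lin_expand[OF lin_comp[OF lin_Lstar lin_LT1pow] lin_comp[OF lin_Lh lin_Lstar] assms(2)])
  fix I u assume I: "valid_idx m n I" and u: "valid_word u"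
  have L: "Lstar m' i (LT1pow e (basis (I, u))) = (\<Sum>k\<in>{1..length I}. Lterm m' i I (hmul (hTpow (length I + 1) e) (basis u)) k)"
    using assms(1) by (simp add: LT1pow_def hshift_hTpow Lstar_tens)
  have R: "Lh (hTpow 2 e) (Lstar m' i (basis (I, u))) = (\<Sum>k\<in>{1..length I}. Lh (hTpow 2 e) (Lterm m' i I (basis u) k))"
    by (simp add: Lstar_basis Lh_sum)
  have "Lstar m' i (LT1pow e (basis (I, u))) - Lh (hTpow 2 e) (Lstar m' i (basis (I, u)))
     = (\<Sum>k\<in>{1..length I}. Lterm m' i I (hmul (hTpow (length I + 1) e) (basis u)) k - Lh (hTpow 2 e) (Lterm m' i I (basis u) k))"
    unfolding L R by (simp add: sum_subtractf)
  also have "\<dots> \<in> Rel m n"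
  proof (rule Rel_sum)
    fix k assume k: "k \<in> {1..length I}"
    show "Lterm m' i I (hmul (hTpow (length I + 1) e) (basis u)) k - Lh (hTpow 2 e) (Lterm m' i I (basis u) k) \<in> Rel m n"
    proof (cases "I ! (k - 1) = i")
      case False then show ?thesis by (simp add: Lterm_def Rel_zero)
    next
      case True
      from k have k1: "1 \<le> k" "k \<le> length I" by auto
      have len: "Suc (Suc (length (lrem I k))) = Suc (length I)" using k1 by (simp add: length_lrem)
      have "Lterm m' i I (hmul (hTpow (length I + 1) e) (basis u)) k - Lh (hTpow 2 e) (Lterm m' i I (basis u) k)
        = smul (lsc m' i I k) (tens (lrem I k) (hmul (hmul (lH i I k) (hTpow (length I + 1) e) - hmul (hTpow (length I + 1) e) (lH i I k)) (basis u)))"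
        using True assms(1) by (simp add: Lterm_def Lh_smul Lh_tens hshift_hTpow len hmul_assoc hmul_simps tens_diff smul_diff)
      moreover have "tens (lrem I k) (hmul (hmul (lH i I k) (hTpow (length I + 1) e) - hmul (hTpow (length I + 1) e) (lH i I k)) (basis u)) \<in> Rel m n"
        using hcomm_lH[of k I e i] k assms(1) u I
        by (intro Rel_tens valid_idx_lrem HR_mult_right) (auto simp: hcomm_def)
      ultimately show ?thesis by (simp add: Rel_smul)
    qed
  qed
  finally show "Lstar m' i (LT1pow e (basis (I, u))) - Lh (hTpow 2 e) (Lstar m' i (basis (I, u))) \<in> Rel m n" .
qed




lemma braid_rel: "basis [1, 2, 1] - basis [2, 1, 2] \<in> hecke_rels"
  unfolding hecke_rels_def by (rule UnI1, rule UnI2, rule CollectI, rule exI[of _ 1]) (simp add: numeral_2_eq_2)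

lemma bx_ppp: "hmul (hTpow 1 (1)) (hmul (hTpow 2 (1)) (hTpow 1 (1))) - hmul (hTpow 2 (1)) (hmul (hTpow 1 (1)) (hTpow 2 (1))) = (basis [1, 2, 1] - basis [2::nat, 1, 2])"
  unfolding hTpow_def hTinv_cq hT_def by (simp add: hmul_simps smul_diff)

lemma bx_ppm: "hmul (hTpow 1 (1)) (hmul (hTpow 2 (1)) (hTpow 1 (-1))) - hmul (hTpow 2 (-1)) (hmul (hTpow 1 (1)) (hTpow 2 (1))) = (basis [1, 2, 1] - basis [2::nat, 1, 2])"
  unfolding hTpow_def hTinv_cq hT_def by (simp add: hmul_simps smul_diff)

lemma bx_mpp: "hmul (hTpow 1 (-1)) (hmul (hTpow 2 (1)) (hTpow 1 (1))) - hmul (hTpow 2 (1)) (hmul (hTpow 1 (1)) (hTpow 2 (-1))) = (basis [1, 2, 1] - basis [2::nat, 1, 2])"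
  unfolding hTpow_def hTinv_cq hT_def by (simp add: hmul_simps smul_diff)

lemma bx_mmm: "hmul (hTpow 1 (-1)) (hmul (hTpow 2 (-1)) (hTpow 1 (-1))) - hmul (hTpow 2 (-1)) (hmul (hTpow 1 (-1)) (hTpow 2 (-1))) = (basis [1, 2, 1] - basis [2::nat, 1, 2]) - smul cq (basis [1, 1] - smul cq (basis [1]) - basis ([]::nat list)) + smul cq (basis [2, 2] - smul cq (basis [2]) - basis ([]::nat list))"
  unfolding hTpow_def hTinv_cq hT_def by (simp add: hmul_simps smul_diff)

lemma bx_pmm: "hmul (hTpow 1 (1)) (hmul (hTpow 2 (-1)) (hTpow 1 (-1))) - hmul (hTpow 2 (-1)) (hmul (hTpow 1 (-1)) (hTpow 2 (1))) = (basis [1, 2, 1] - basis [2::nat, 1, 2]) - smul cq (basis [1, 1] - smul cq (basis [1]) - basis ([]::nat list)) + smul cq (basis [2, 2] - smul cq (basis [2]) - basis ([]::nat list))"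
  unfolding hTpow_def hTinv_cq hT_def by (simp add: hmul_simps smul_diff)

lemma bx_mmp: "hmul (hTpow 1 (-1)) (hmul (hTpow 2 (-1)) (hTpow 1 (1))) - hmul (hTpow 2 (1)) (hmul (hTpow 1 (-1)) (hTpow 2 (-1))) = (basis [1, 2, 1] - basis [2::nat, 1, 2]) - smul cq (basis [1, 1] - smul cq (basis [1]) - basis ([]::nat list)) + smul cq (basis [2, 2] - smul cq (basis [2]) - basis ([]::nat list))"
  unfolding hTpow_def hTinv_cq hT_def by (simp add: hmul_simps smul_diff)

lemma braid:
  assumes "pm1 x" "pm1 y" "pm1 z" "\<not> (x = 1 \<and> y = -1 \<and> z = 1)" "\<not> (x = -1 \<and> y = 1 \<and> z = -1)"
  shows "hmul (hTpow 1 x) (hmul (hTpow 2 y) (hTpow 1 z)) - hmul (hTpow 2 z) (hmul (hTpow 1 y) (hTpow 2 x)) \<in> HR"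
proof -
  define B where "B = basis [1, 2, 1] - basis [2::nat, 1, 2]"
  define Q1 where "Q1 = basis [1, 1] - smul cq (basis [1]) - basis ([]::nat list)"
  define Q2 where "Q2 = basis [2, 2] - smul cq (basis [2]) - basis ([]::nat list)"
  have B: "B \<in> HR" unfolding B_def by (rule HR_rel[OF braid_rel])
  have Q1: "Q1 \<in> HR" unfolding Q1_def by (rule HR_rel[OF Q_rel]) simp
  have Q2: "Q2 \<in> HR" unfolding Q2_def by (rule HR_rel[OF Q_rel]) simp
  have C: "B - smul cq Q1 + smul cq Q2 \<in> HR" using B Q1 Q2 by (intro HR_add HR_diff HR_smul)
  have "x = 1 \<or> x = -1" "y = 1 \<or> y = -1" "z = 1 \<or> z = -1" using assms by (auto simp: pm1_def)
  then show ?thesis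
    using assms(4,5) B C bx_ppp bx_ppm bx_mpp bx_mmm bx_pmm bx_mmp
    unfolding B_def Q1_def Q2_def by auto
qed

lemma tensv_smul: "tensv (smul c v) u = smul c (tensv v u)" using lin_smul[OF lin_tensv] .
lemma tensv_add: "tensv (v + w) u = tensv v u + tensv w u" using lin_add[OF lin_tensv] .

lemma actT_last2:
  "actT m (I @ [i, j]) (Suc (length I)) =
    (if i > j then smul (psign m i j) (basis (I @ [j, i]))
     else if i = j then smul ((-1) ^ par m i * qi m i) (basis (I @ [i, j]))
     else smul (psign m i j) (basis (I @ [j, i])) + smul (qq - inverse qq) (basis (I @ [i, j])))"
proof -
  have "(I @ [i, j]) ! length I = i" "(I @ [i, j]) ! Suc (length I) = j"
    by (simp_all add: nth_append)
  moreover have "(I @ [i, j])[length I := j, Suc (length I) := i] = I @ [j, i]"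
    by (simp add: list_update_append)
  ultimately show ?thesis by (simp add: actT_def Let_def)
qed

lemma R1_basis:
  assumes I: "valid_idx m n I" and u: "valid_word u" and ij: "i \<in> {1..m+n}" "j \<in> {1..m+n}"
  shows "teq m n (Le i (Le j (basis (I, u))))
          (smul (psign m i j * qi m i ^ (if i = j then 1 else 0)) (Le j (Le i (LT1pow (gam i j) (basis (I, u))))))"
proof -
  define G where "G = tensv (actT m (I @ [i, j]) (length I + 1)) u - basis (I @ [i, j], (length I + 1) # u)"
  have G: "G \<in> Rel m n" unfolding G_def using I u ij by (intro Rel_gen relgen_I2) (auto simp: valid_idx_def)
  define B1 where "B1 = basis (I @ [j, i], u)"
  define B2 where "B2 = basis (I @ [i, j], u)"
  define B3 where "B3 = basis (I @ [i, j], (length I + 1) # u)"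
  have L: "Le i (Le j (basis (I, u))) = B1" by (simp add: B1_def)
  have T: "LT1pow e (basis (I, u)) = tens I (hmul (hTpow (length I + 1) e) (basis u))" if "pm1 e" for e
    using that by (simp add: LT1pow_def hshift_hTpow)
  have ps: "psign m i j * psign m i j = 1" by (rule psign_sq)
  consider (gt) "i > j" | (eq) "i = j" | (lt) "i < j" by linarith
  then show ?thesis
  proof cases
    case gt
    have R: "Le j (Le i (LT1pow (gam i j) (basis (I, u)))) = B3"
      using gt by (simp add: T pm1_def B3_def gam_def hTpow_def hT_def Le_tens)
    have GG: "G = smul (psign m i j) B1 - B3" using gt by (simp add: G_def actT_last2 B1_def B3_def tensv_smul)
    have "B1 - smul (psign m i j) B3 = smul (psign m i j) G"
      unfolding GG using ps by (simp add: smul_diff)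
    then show ?thesis using gt G unfolding teq_def L R by (simp add: Rel_smul)
  next
    case eq
    have R: "Le j (Le i (LT1pow (gam i j) (basis (I, u)))) = B3 - smul cq B2"
      using eq by (simp add: T pm1_def B3_def B2_def gam_def hTpow_def hTinv_cq hT_def Le_tens hmul_simps tens_diff tens_smul Le_diff Le_smul)
    have GG: "G = smul ((-1) ^ par m i * qi m i) B2 - B3" using eq by (simp add: G_def actT_last2 B2_def B3_def tensv_smul)
    have sc': "X + cq * (qi m a * (psign m a a * X)) = qi m a * (qi m a * (psign m a a * ((- 1) ^ par m a * X)))" for a X
      using qq_nz by (simp add: psign_def qi_def par_def cq_def field_simps)
    have "B1 - smul (psign m i j * qi m i ^ (if i = j then 1 else 0)) (B3 - smul cq B2)
        = smul (psign m i i * qi m i) G"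
      unfolding GG using eq
      by (simp add: B1_def B2_def smul_diff)
         (rule poly_mapping_eqI, simp add: lookup_minus lookup_add algebra_simps, rule sc')
    then show ?thesis using G unfolding teq_def L R by (simp add: Rel_smul)
  next
    case lt
    have R: "Le j (Le i (LT1pow (gam i j) (basis (I, u)))) = B3 - smul cq B2"
      using lt by (simp add: T pm1_def B3_def B2_def gam_def hTpow_def hTinv_cq hT_def Le_tens hmul_simps tens_diff tens_smul Le_diff Le_smul)
    have GG: "G = smul (psign m i j) B1 + smul cq B2 - B3"
      using lt by (simp add: G_def actT_last2 B1_def B2_def B3_def cq_def tensv_smul tensv_add)
    have "B1 - smul (psign m i j) (B3 - smul cq B2) = smul (psign m i j) G"
      unfolding GG using ps lt
      by (simp add: smul_diff smul_add)
    then show ?thesis using G lt unfolding teq_def L R by (simp add: Rel_smul)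
  qed
qed




lemma Lstar_Nil: "Lstar m j (basis ([], u)) = 0" by (simp add: Lstar_basis)

lemma validv_Lstar2: "validv m n y \<Longrightarrow> validv m n (Lstar m i (Lstar m j y))"
  by (intro validv_Lstar)

lemma M_part:
  assumes ij: "i \<in> {1..m+n}" "j \<in> {1..m+n}" and a: "a \<in> {1..m+n}" and y: "validv m n y"
    and IH: "teq m n (Lstar m i (Lstar m j y)) (smul c (LT1pow (gam i j) (Lstar m j (Lstar m i y))))"
  shows "teq m n (Le a (LT1pow (- gam i a) (Lstar m i (LT1pow (- gam j a) (Lstar m j y)))))
                 (smul c (LT1pow (gam i j) (Le a (LT1pow (- gam j a) (Lstar m j (LT1pow (- gam i a) (Lstar m i y)))))))"
proof -
  define x0 where "x0 = - gam i a"
  define y0 where "y0 = - gam j a"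
  define z0 where "z0 = gam i j"
  have pm: "pm1 x0" "pm1 y0" "pm1 z0" by (simp_all add: x0_def y0_def z0_def)
  have vh: "validh (hTpow k e)" if "1 \<le> k" "pm1 e" for k e using that by (rule validh_hTpow)
  define P where "P = hmul (hTpow 1 x0) (hTpow 2 y0)"
  define Q where "Q = hmul (hTpow 2 z0) (hmul (hTpow 1 y0) (hTpow 2 x0))"
  have vP: "validh P" unfolding P_def using pm by (intro validh_hmul vh) auto
  have vQ: "validh Q" unfolding Q_def using pm by (intro validh_hmul vh) auto
  have vLj: "validv m n (Lstar m j y)" "validv m n (Lstar m i y)" using y by (simp_all add: validv_Lstar)
  have vX2: "validv m n (Lstar m j (Lstar m i y))" using y by (simp add: validv_Lstar)
  have nb: "\<not> (x0 = 1 \<and> y0 = -1 \<and> z0 = 1)" "\<not> (x0 = -1 \<and> y0 = 1 \<and> z0 = -1)"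
    by (auto simp: x0_def y0_def z0_def gam_def split: if_splits)
  have "Le a (LT1pow x0 (Lstar m i (LT1pow y0 (Lstar m j y))))
      = Le a (Lh (hTpow 1 x0) (Lstar m i (LT1pow y0 (Lstar m j y))))" by (simp add: LT1pow_def)
  also have "teq m n \<dots> (Le a (Lh (hTpow 1 x0) (Lh (hTpow 2 y0) (Lstar m i (Lstar m j y)))))"
    using pm by (intro teq_Le[OF a] teq_Lh[OF vh] Lstar_LT vLj) auto
  also have "\<dots> = Le a (Lh P (Lstar m i (Lstar m j y)))" by (simp add: Lh_mult P_def)
  also have "teq m n \<dots> (Le a (Lh P (smul c (LT1pow z0 (Lstar m j (Lstar m i y))))))"
    using IH by (intro teq_Le[OF a] teq_Lh[OF vP]) (simp add: z0_def)
  also have "\<dots> = smul c (Le a (Lh (hmul (hTpow 1 x0) (hmul (hTpow 2 y0) (hTpow 1 z0))) (Lstar m j (Lstar m i y))))"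
    by (simp add: Lh_smul Le_smul LT1pow_def Lh_mult P_def hmul_assoc)
  also have "teq m n \<dots> (smul c (Le a (Lh Q (Lstar m j (Lstar m i y)))))"
    unfolding Q_def using braid[OF pm nb] vX2
    by (intro teq_smul teq_Le[OF a] teq_Lh_HR)
  finally have L: "teq m n (Le a (LT1pow x0 (Lstar m i (LT1pow y0 (Lstar m j y))))) (smul c (Le a (Lh Q (Lstar m j (Lstar m i y)))))" .
  have "LT1pow z0 (Le a (LT1pow y0 (Lstar m j (LT1pow x0 (Lstar m i y)))))
      = Le a (Lh (hTpow 2 z0) (Lh (hTpow 1 y0) (Lstar m j (LT1pow x0 (Lstar m i y)))))"
    using pm by (simp add: LT1pow_def Lh_Le hshift_hTpow numeral_2_eq_2)
  also have "teq m n \<dots> (Le a (Lh (hTpow 2 z0) (Lh (hTpow 1 y0) (Lh (hTpow 2 x0) (Lstar m j (Lstar m i y))))))"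
    using pm by (intro teq_Le[OF a] teq_Lh[OF vh] Lstar_LT vLj) auto
  also have "\<dots> = Le a (Lh Q (Lstar m j (Lstar m i y)))" by (simp add: Lh_mult Q_def)
  finally have R: "teq m n (LT1pow z0 (Le a (LT1pow y0 (Lstar m j (LT1pow x0 (Lstar m i y)))))) (Le a (Lh Q (Lstar m j (Lstar m i y))))" .
  show ?thesis
    using teq_trans[OF L teq_sym[OF teq_smul[OF R, of c]]] by (simp add: x0_def y0_def z0_def)
qed

lemma LTm1: "LT1pow (-1) z = LT1pow 1 z - smul cq z"
  by (simp add: LT1pow_def hTpow_def hTinv_cq Lh_diff_h Lh_smul_h)

lemma K_part:
  assumes ij: "i \<in> {1..m+n}" "j \<in> {1..m+n}" and y: "validv m n y"
  shows "teq m n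
    ((if a = j then smul (if i = j then inverse (qi m j) else 1) (Kinv m j (Lstar m i y)) else 0)
      + smul (psign m j a) (if a = i then Kinv m i (LT1pow (- gam j a) (Lstar m j y)) else 0))
    (smul (psign m i j * qi m i ^ (if i = j then 1 else 0)) (LT1pow (gam i j)
      ((if a = i then smul (if j = i then inverse (qi m i) else 1) (Kinv m i (Lstar m j y)) else 0)
      + smul (psign m i a) (if a = j then Kinv m j (LT1pow (- gam i a) (Lstar m i y)) else 0))))"
proof -
  have vz: "validv m n (Kinv m j (Lstar m i y))" "validv m n (Kinv m i (Lstar m i y))"
    using y by (simp_all add: validv_Kinv validv_Lstar)
  consider (n) "a \<noteq> i" "a \<noteq> j" | (aj) "a = j" "a \<noteq> i" | (ai) "a = i" "a \<noteq> j" | (aij) "a = i" "a = j" by blast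
  then show ?thesis
  proof cases
    case n then show ?thesis by (simp add: teq_refl)
  next
    case aj
    have "teq m n (Kinv m j (Lstar m i y)) (LT1pow (gam i j) (LT1pow (- gam i j) (Kinv m j (Lstar m i y))))"
      by (rule teq_sym[OF LT_inv[OF pm1_gam(1) vz(1)]])
    then show ?thesis using aj psign_sq[of m i j]
      by (simp add: LT_smul Kinv_LT)
  next
    case ai
    then show ?thesis using gam_swap[of i j] psign_sym[of m i j]
      by (simp add: LT_smul Kinv_LT teq_refl)
  next
    case aij
    define z where "z = Kinv m i (Lstar m i y)"
    define q where "q = qi m i"
    define s where "s = psign m i i"
    have sc: "inverse q * X + s * Y = s * q * inverse q * (Y - cq * X) + s * q * s * X" for X Y
      using qq_nz unfolding q_def s_def by (cases "i \<le> m") (simp_all add: psign_def qi_def par_def cq_def field_simps)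
    have L: "(if a = j then smul (if i = j then inverse (qi m j) else 1) (Kinv m j (Lstar m i y)) else 0)
      + smul (psign m j a) (if a = i then Kinv m i (LT1pow (- gam j a) (Lstar m j y)) else 0)
      = smul (inverse q) z + smul s (LT1pow 1 z)"
      using aij by (simp add: z_def q_def s_def gam_eq Kinv_LT)
    have R: "smul (psign m i j * qi m i ^ (if i = j then 1 else 0)) (LT1pow (gam i j)
      ((if a = i then smul (if j = i then inverse (qi m i) else 1) (Kinv m i (Lstar m j y)) else 0)
      + smul (psign m i a) (if a = j then Kinv m j (LT1pow (- gam i a) (Lstar m i y)) else 0)))
      = smul (s * q * inverse q) (LT1pow (-1) z) + smul (s * q * s) (LT1pow (-1) (LT1pow (- (-1)) z))"
      using aij by (simp add: z_def q_def s_def gam_eq Kinv_LT LT_add LT_smul smul_add mult.commute)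
    have vz': "validv m n z" using vz(2) by (simp add: z_def)
    have "teq m n (smul (s * q * inverse q) (LT1pow (-1) z) + smul (s * q * s) (LT1pow (-1) (LT1pow (- (-1)) z)))
                  (smul (s * q * inverse q) (LT1pow (-1) z) + smul (s * q * s) z)"
      by (intro teq_add teq_refl teq_smul LT_inv vz') (simp add: pm1_def)
    moreover have "smul (s * q * inverse q) (LT1pow (-1) z) + smul (s * q * s) z
        = smul (inverse q) z + smul s (LT1pow 1 z)"
      unfolding LTm1
      by (rule poly_mapping_eqI) (simp add: lookup_add lookup_minus sc)
    ultimately show ?thesis unfolding L R by (simp add: teq_sym)
  qed
qed




lemma R2_basis:
  assumes ij: "i \<in> {1..m+n}" "j \<in> {1..m+n}"
  shows "valid_idx m n I \<Longrightarrow> valid_word u \<Longrightarrow>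
    teq m n (Lstar m i (Lstar m j (basis (I, u))))
      (smul (psign m i j * qi m i ^ (if i = j then 1 else 0)) (LT1pow (gam i j) (Lstar m j (Lstar m i (basis (I, u))))))"
proof (induction I rule: rev_induct)
  case Nil then show ?case by (simp add: Lstar_Nil teq_refl)
next
  case (snoc a I)
  have I: "valid_idx m n I" and a: "a \<in> {1..m+n}" using snoc.prems by auto
  define y where "y = basis (I, u)"
  have y: "validv m n y" using I snoc.prems(2) by (simp add: y_def)
  have IH: "teq m n (Lstar m i (Lstar m j y))
      (smul (psign m i j * qi m i ^ (if i = j then 1 else 0)) (LT1pow (gam i j) (Lstar m j (Lstar m i y))))"
    using snoc.IH[OF I snoc.prems(2)] by (simp add: y_def)
  have e: "basis (I @ [a], u) = Le a y" by (simp add: y_def)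
  define c where "c = psign m i j * qi m i ^ (if i = j then 1 else 0)"
  define KL where "KL = (if a = j then smul (if i = j then inverse (qi m j) else 1) (Kinv m j (Lstar m i y)) else 0)
      + smul (psign m j a) (if a = i then Kinv m i (LT1pow (- gam j a) (Lstar m j y)) else 0)"
  define KR where "KR = (if a = i then smul (if j = i then inverse (qi m i) else 1) (Kinv m i (Lstar m j y)) else 0)
      + smul (psign m i a) (if a = j then Kinv m j (LT1pow (- gam i a) (Lstar m i y)) else 0)"
  have L: "Lstar m i (Lstar m j (Le a y)) = KL + smul (psign m j a * psign m i a)
      (Le a (LT1pow (- gam i a) (Lstar m i (LT1pow (- gam j a) (Lstar m j y)))))"
    unfolding KL_def
    by (cases "a = j"; cases "a = i") (simp_all add: R3 Lstar_add Lstar_smul Lstar_Kinv smul_add add.assoc)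
  have R: "smul c (LT1pow (gam i j) (Lstar m j (Lstar m i (Le a y)))) = smul c (LT1pow (gam i j) KR)
      + smul (psign m j a * psign m i a) (smul c (LT1pow (gam i j) (Le a (LT1pow (- gam j a) (Lstar m j (LT1pow (- gam i a) (Lstar m i y)))))))"
    unfolding KR_def
    by (cases "a = j"; cases "a = i") (simp_all add: R3 Lstar_add Lstar_smul Lstar_Kinv LT_add LT_smul smul_add add.assoc mult.commute)
  have "teq m n (KL + smul (psign m j a * psign m i a)
      (Le a (LT1pow (- gam i a) (Lstar m i (LT1pow (- gam j a) (Lstar m j y))))))
     (smul c (LT1pow (gam i j) KR)
      + smul (psign m j a * psign m i a) (smul c (LT1pow (gam i j) (Le a (LT1pow (- gam j a) (Lstar m j (LT1pow (- gam i a) (Lstar m i y))))))))"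
    unfolding KL_def KR_def c_def
    by (intro teq_add K_part[OF ij y] teq_smul M_part[OF ij a y IH])
  then show ?case unfolding e L R[unfolded c_def] c_def .
qed

lemma R2:
  assumes ij: "i \<in> {1..m+n}" "j \<in> {1..m+n}" and x: "validv m n x"
  shows "teq m n (Lstar m i (Lstar m j x))
      (smul (psign m i j * qi m i ^ (if i = j then 1 else 0)) (LT1pow (gam i j) (Lstar m j (Lstar m i x))))"
  unfolding teq_def
  by (rule Rel_lin_expand[OF lin_comp[OF lin_Lstar lin_Lstar]
        lin_smulc[OF lin_comp[OF lin_LT1pow lin_comp[OF lin_Lstar lin_Lstar]]] x])
     (rule R2_basis[OF ij, unfolded teq_def])

lemma R1:
  assumes ij: "i \<in> {1..m+n}" "j \<in> {1..m+n}" and x: "validv m n x"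
  shows "teq m n (Le i (Le j x))
      (smul (psign m i j * qi m i ^ (if i = j then 1 else 0)) (Le j (Le i (LT1pow (gam i j) x))))"
  unfolding teq_def
  by (rule Rel_lin_expand[OF lin_comp[OF lin_Le lin_Le]
        lin_smulc[OF lin_comp[OF lin_Le lin_comp[OF lin_Le lin_LT1pow]]] x])
     (rule R1_basis[OF _ _ ij, unfolded teq_def])

theorem proposition6p3:
  fixes m n i j :: nat
  assumes "1 \<le> m" and "1 \<le> n"
    and "i \<in> {1..m+n}" and "j \<in> {1..m+n}"
  shows "\<forall>x. validv m n x \<longrightarrow>
           (teq m n (Le i (Le j x))
              (smul (psign m i j * qi m i ^ (if i = j then 1 else 0))
                    (Le j (Le i (LT1pow (gam i j) x))))
          \<and> teq m n (Lstar m i (Lstar m j x))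
              (smul (psign m i j * qi m i ^ (if i = j then 1 else 0))
                    (LT1pow (gam i j) (Lstar m j (Lstar m i x))))
          \<and> teq m n (Lstar m i (Le j x))
              ((if i = j then Kinv m i x else 0)
               + smul (psign m i j) (Le j (LT1pow (- gam i j) (Lstar m i x)))))"
proof (intro allI impI conjI)
  fix x assume x: "validv m n x"
  show "teq m n (Le i (Le j x))
              (smul (psign m i j * qi m i ^ (if i = j then 1 else 0))
                    (Le j (Le i (LT1pow (gam i j) x))))"
    by (rule R1[OF assms(3,4) x])
  show "teq m n (Lstar m i (Lstar m j x))
              (smul (psign m i j * qi m i ^ (if i = j then 1 else 0))
                    (LT1pow (gam i j) (Lstar m j (Lstar m i x))))"
    by (rule R2[OF assms(3,4) x])
  show "teq m n (Lstar m i (Le j x))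
              ((if i = j then Kinv m i x else 0)
               + smul (psign m i j) (Le j (LT1pow (- gam i j) (Lstar m i x))))"
    by (rule teq_eq) (simp add: R3 eq_commute[of j i])
qed


end
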